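(* For every $J\subseteq[n-1]$, the zero loci of the sections $\phi_J$ of $U_J$ and $\psi_J$ of $V_J$ over $\mathrm{Pet}_n$ are $$Z(\phi_J)=X_J\qquad\text{and}\qquad Z(\psi_J)=\Omega_J.$$
   Context: $B\subseteq GL_n(\mathbb C)$ is the upper triangular Borel subgroup, $T$ the diagonal torus, $Fl_n=GL_n(\mathbb C)/B$. For a $B$-representation $W$, $GL_n(\mathbb C)\times^BW\to Fl_n$ is the associated vector bundle, with $[g,w]=[gb,b^{-1}\cdot w]$. $\varpi_i:T\to\mathbb C^\times$, $\mathrm{diag}(t_1,\dots,t_n)\mapsto t_1\cdots t_i$, is extended to $B$ via $B\to T$, and $\mathbb C_{\varpi_i}$ is the corresponding one-dimensional representation. $N$ is the $n\times n$ nilpotent Jordan block ($Ne_1=0$, $Ne_i=e_{i-1}$), and $\mathrm{Pet}_n=\{gB: g^{-1}Ng\in H_{[n-1]}\}$, where for $J\subseteq[n-1]$, $H_J\subseteq\mathfrak{gl}_n(\mathbb C)$ is the $B$-stable subspace of matrices whose $(r,c)$ entry vanishes whenever $r>c$, except possibly the entries $(i+1,i)$ with $i\in J$ (i.e. $H_J=\mathfrak b\oplus\bigoplus_{i\in J}\mathfrak g_{-\alpha_i}$). Define $U_J=GL_n(\mathbb C)\times^B(H_{[n-1]}/H_J)$ with section $\phi_J(gB)=[g,\,g^{-1}Ng \bmod H_J]$ over $\mathrm{Pet}_n$, and $V_J=GL_n(\mathbb C)\times^B\bigl(\bigoplus_{i\in J}\mathbb C_{\varpi_i}^*\bigr)$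 with section $\psi_J(gB)=[g,(\det_i(g))_{i\in J}]$, where $\det_i(g)$ is the leading principal $i\times i$ minor of $g$. Let $X_w=\overline{BwB/B}$, $\Omega_w=\overline{B^-wB/B}$, $w_J$ the longest element of the subgroup of $\mathfrak S_n$ generated by $\{s_i:i\in J\}$, $X_J=X_{w_J}\cap\mathrm{Pet}_n$, $\Omega_J=\Omega_{w_J}\cap\mathrm{Pet}_n$. *)

theory Defs
  imports "HOL-Analysis.Analysis" "Jordan_Normal_Form.Determinant" "HOL-Combinatorics.Transposition"
begin

text \<open>Conventions: matrices are n x n complex JNF matrices, rows/columns 0-indexed. The simple reflection s_i (1 \<le> i \<le> n-1 in the
  paper's 1-indexed notation) swaps the 0-indexed positions i-1 and i.\<close>

definition GL :: "nat \<Rightarrow> complex mat set" where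
  "GL n = {g \<in> carrier_mat n n. invertible_mat g}"

definition Borel :: "nat \<Rightarrow> complex mat set" where
  "Borel n = {b \<in> GL n. \<forall>i j. j < i \<longrightarrow> i < n \<longrightarrow> b $$ (i, j) = 0}"

definition Borel_minus :: "nat \<Rightarrow> complex mat set" where
  "Borel_minus n = {b \<in> GL n. \<forall>i j. i < j \<longrightarrow> j < n \<longrightarrow> b $$ (i, j) = 0}"

definition minv :: "nat \<Rightarrow> complex mat \<Rightarrow> complex mat" where
  "minv n g = (THE h. h \<in> carrier_mat n n \<and> h * g = 1\<^sub>m n)"

definition Njor :: "nat \<Rightarrow> complex mat" where
  "Njor n = mat n n (\<lambda>(r, c). if c = r + 1 then 1 else 0)"

text \<open>H_J, J \<subseteq> {1..n-1}: entries below the diagonal vanish except the (1-indexed)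
  entries (i+1,i), i \<in> J, i.e. the 0-indexed entries (i, i-1).\<close>
definition Hess :: "nat \<Rightarrow> nat set \<Rightarrow> complex mat set" where
  "Hess n J = {A \<in> carrier_mat n n. \<forall>r c. r < n \<longrightarrow> c < r \<longrightarrow>
      A $$ (r, c) = 0 \<or> (r = c + 1 \<and> r \<in> J)}"

text \<open>Representatives g of the points gB of the Peterson variety.\<close>
definition Pet :: "nat \<Rightarrow> complex mat set" where
  "Pet n = {g \<in> GL n. minv n g * Njor n * g \<in> Hess n {1..<n}}"

definition perm_mat :: "nat \<Rightarrow> (nat \<Rightarrow> nat) \<Rightarrow> complex mat" where
  "perm_mat n w = mat n n (\<lambda>(i, j). if i = w j then 1 else 0)"

definition simple_refl :: "nat \<Rightarrow> nat \<Rightarrow> nat" where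
  "simple_refl i = Transposition.transpose (i - 1) i"

inductive_set parabolic :: "nat set \<Rightarrow> (nat \<Rightarrow> nat) set" for J where
  id: "id \<in> parabolic J"
| step: "p \<in> parabolic J \<Longrightarrow> i \<in> J \<Longrightarrow> simple_refl i \<circ> p \<in> parabolic J"

definition perm_length :: "nat \<Rightarrow> (nat \<Rightarrow> nat) \<Rightarrow> nat" where
  "perm_length n p = card {(a, b). a < b \<and> b < n \<and> p b < p a}"

definition longest :: "nat \<Rightarrow> nat set \<Rightarrow> (nat \<Rightarrow> nat)" where
  "longest n J = (ARG_MAX (perm_length n) p. p \<in> parabolic J)"

text \<open>Embedding of n x n matrices into the function space (product = Euclidean topology).\<close>
definition mat_fun :: "complex mat \<Rightarrow> nat \<Rightarrow> nat \<Rightarrow> complex" where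
  "mat_fun A = (\<lambda>i j. if i < dim_row A \<and> j < dim_col A then A $$ (i, j) else 0)"

definition Bruhat_cell :: "nat \<Rightarrow> (nat \<Rightarrow> nat) \<Rightarrow> complex mat set" where
  "Bruhat_cell n w = {b1 * perm_mat n w * b2 | b1 b2. b1 \<in> Borel n \<and> b2 \<in> Borel n}"

definition opp_cell :: "nat \<Rightarrow> (nat \<Rightarrow> nat) \<Rightarrow> complex mat set" where
  "opp_cell n w = {b1 * perm_mat n w * b2 | b1 b2. b1 \<in> Borel_minus n \<and> b2 \<in> Borel n}"

text \<open>Preimages in GL_n of X_w = closure(BwB/B) and Omega_w = closure(B^-wB/B); since
  GL_n \<rightarrow> Fl_n is an open quotient map, the preimage of the closure is the closure of
  BwB (resp. B^-wB) in GL_n.\<close>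
definition schubert :: "nat \<Rightarrow> (nat \<Rightarrow> nat) \<Rightarrow> complex mat set" where
  "schubert n w = {g \<in> GL n. mat_fun g \<in> closure (mat_fun ` Bruhat_cell n w)}"

definition opp_schubert :: "nat \<Rightarrow> (nat \<Rightarrow> nat) \<Rightarrow> complex mat set" where
  "opp_schubert n w = {g \<in> GL n. mat_fun g \<in> closure (mat_fun ` opp_cell n w)}"

definition lead_minor :: "nat \<Rightarrow> complex mat \<Rightarrow> complex" where
  "lead_minor i g = det (mat i i (\<lambda>(r, c). g $$ (r, c)))"

text \<open>Zero loci (as sets of representatives g of points gB of Pet_n):
  phi_J(gB) = [g, g^{-1}Ng mod H_J] vanishes iff g^{-1}Ng \<in> H_J;
  psi_J(gB) = [g, (det_i g)_{i\<in>J}] vanishes iff det_i g = 0 for all i \<in> J.\<close>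
definition zero_phi :: "nat \<Rightarrow> nat set \<Rightarrow> complex mat set" where
  "zero_phi n J = {g \<in> Pet n. minv n g * Njor n * g \<in> Hess n J}"

definition zero_psi :: "nat \<Rightarrow> nat set \<Rightarrow> complex mat set" where
  "zero_psi n J = {g \<in> Pet n. \<forall>i \<in> J. lead_minor i g = 0}"

end

theory Submission
  imports Defs
begin

lemma mult_entry:
  assumes "A \<in> carrier_mat n n" "B \<in> carrier_mat n n" "i < n" "j < n"
  shows "(A * B) $$ (i,j) = (\<Sum>k<n. A $$ (i,k) * B $$ (k,j))"
  using assms by (auto simp: scalar_prod_def lessThan_atLeast0 intro!: sum.cong)

lemma sum_single:
  assumes "finite S" "k0 \<in> S" "\<And>k. k \<in> S \<Longrightarrow> k \<noteq> k0 \<Longrightarrow> f k = 0"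
  shows "sum f S = f k0"
proof -
  have "sum f S = f k0 + sum f (S - {k0})" using assms by (simp add: sum.remove)
  also have "sum f (S - {k0}) = 0" using assms by (intro sum.neutral) auto
  finally show ?thesis by simp
qed

lemma GL_det:
  fixes g :: "complex mat"
  assumes "g \<in> carrier_mat n n"
  shows "invertible_mat g \<longleftrightarrow> det g \<noteq> 0"
proof
  assume "invertible_mat g"
  then obtain h where gh: "g * h = 1\<^sub>m n" and hg: "h * g = 1\<^sub>m (dim_row h)"
    using assms unfolding invertible_mat_def inverts_mat_def by auto
  have "dim_col (h * g) = n" using assms by simp
  hence r: "dim_row h = n" using hg by (metis index_one_mat(3))
  have "dim_col (g * h) = dim_col h" by simp
  hence c: "dim_col h = n" using gh by (metis index_one_mat(3))
  have hc: "h \<in> carrier_mat n n" using r c by auto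
  have "det g * det h = 1" using det_mult[OF assms hc] gh by simp
  thus "det g \<noteq> 0" by auto
next
  assume "det g \<noteq> 0"
  from det_non_zero_imp_unit[OF assms this, of "()"]
  obtain h where h: "h \<in> carrier_mat n n" "h * g = 1\<^sub>m n"
    unfolding Units_def ring_mat_def by auto
  hence "g * h = 1\<^sub>m n" using mat_mult_left_right_inverse assms by blast
  thus "invertible_mat g" using h assms unfolding invertible_mat_def inverts_mat_def
    by (auto simp: square_mat.simps)
qed

lemma minv_props:
  assumes "g \<in> GL n"
  shows "minv n g \<in> carrier_mat n n" "minv n g * g = 1\<^sub>m n" "g * minv n g = 1\<^sub>m n"
proof -
  have g: "g \<in> carrier_mat n n" "det g \<noteq> 0" using assms GL_det unfolding GL_def by auto
  from det_non_zero_imp_unit[OF g, of "()"]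
  obtain h where h: "h \<in> carrier_mat n n" "h * g = 1\<^sub>m n"
    unfolding Units_def ring_mat_def by auto
  have gh: "g * h = 1\<^sub>m n" using mat_mult_left_right_inverse g h by blast
  have u: "\<And>h'. h' \<in> carrier_mat n n \<and> h' * g = 1\<^sub>m n \<Longrightarrow> h' = h"
  proof -
    fix h' assume a: "h' \<in> carrier_mat n n \<and> h' * g = 1\<^sub>m n"
    have "h' = h' * (g * h)" using a gh right_mult_one_mat[of h' n n] by simp
    also have "\<dots> = (h' * g) * h" using a g h by (metis assoc_mult_mat)
    also have "\<dots> = h" using a h left_mult_one_mat[of h n n] by simp
    finally show "h' = h" .
  qed
  have "minv n g = h" unfolding minv_def
  proof (rule the_equality)
    show "h \<in> carrier_mat n n \<and> h * g = 1\<^sub>m n" using h by simp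
    fix h' assume "h' \<in> carrier_mat n n \<and> h' * g = 1\<^sub>m n" thus "h' = h" by (rule u)
  qed
  thus "minv n g \<in> carrier_mat n n" "minv n g * g = 1\<^sub>m n" "g * minv n g = 1\<^sub>m n"
    using h gh by auto
qed

definition cutz :: "nat \<Rightarrow> nat \<Rightarrow> complex mat \<Rightarrow> bool" where
  "cutz n m A \<longleftrightarrow> (\<forall>k c. c < m \<longrightarrow> m \<le> k \<longrightarrow> k < n \<longrightarrow> A $$ (k,c) = 0)"

definition cutzl :: "nat \<Rightarrow> nat \<Rightarrow> complex mat \<Rightarrow> bool" where
  "cutzl n m A \<longleftrightarrow> (\<forall>k c. k < m \<longrightarrow> m \<le> c \<longrightarrow> c < n \<longrightarrow> A $$ (k,c) = 0)"

lemma cutz_mult: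
  assumes "A \<in> carrier_mat n n" "B \<in> carrier_mat n n" "cutz n m A" "cutz n m B"
  shows "cutz n m (A * B)"
  unfolding cutz_def
proof (intro allI impI)
  fix k c assume kc: "c < m" "m \<le> k" "k < n"
  have "(A * B) $$ (k,c) = (\<Sum>l<n. A $$ (k,l) * B $$ (l,c))"
    using kc assms by (intro mult_entry) auto
  also have "\<dots> = 0"
  proof (intro sum.neutral ballI)
    fix l assume "l \<in> {..<n}"
    show "A $$ (k,l) * B $$ (l,c) = 0"
      using assms(3,4) kc \<open>l \<in> {..<n}\<close> unfolding cutz_def by (cases "l < m") auto
  qed
  finally show "(A * B) $$ (k,c) = 0" .
qed

lemma cutzl_mult:
  assumes "A \<in> carrier_mat n n" "B \<in> carrier_mat n n" "cutzl n m A" "cutzl n m B"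
  shows "cutzl n m (A * B)"
  unfolding cutzl_def
proof (intro allI impI)
  fix k c assume kc: "k < m" "m \<le> c" "c < n"
  have "(A * B) $$ (k,c) = (\<Sum>l<n. A $$ (k,l) * B $$ (l,c))"
    using kc assms by (intro mult_entry) auto
  also have "\<dots> = 0"
  proof (intro sum.neutral ballI)
    fix l assume "l \<in> {..<n}"
    show "A $$ (k,l) * B $$ (l,c) = 0"
      using assms(3,4) kc \<open>l \<in> {..<n}\<close> unfolding cutzl_def by (cases "l < m") auto
  qed
  finally show "(A * B) $$ (k,c) = 0" .
qed

lemma sum_shift_zero:
  fixes f :: "nat \<Rightarrow> complex"
  assumes "m \<le> n" "\<And>k. k < m \<Longrightarrow> f k = 0"
  shows "(\<Sum>k<n. f k) = (\<Sum>k<n-m. f (m + k))"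
proof -
  have "(\<Sum>k<n. f k) = (\<Sum>k\<in>{..<m} \<union> {m..<n}. f k)"
    using assms(1) by (intro sum.cong) auto
  also have "\<dots> = (\<Sum>k<m. f k) + (\<Sum>k\<in>{m..<n}. f k)"
    by (rule sum.union_disjoint) auto
  also have "(\<Sum>k<m. f k) = 0" using assms(2) by simp
  also have "(\<Sum>k\<in>{m..<n}. f k) = (\<Sum>k\<in>{0+m..<(n-m)+m}. f k)" using assms(1) by simp
  also have "\<dots> = (\<Sum>k\<in>{0..<n-m}. f (k + m))" by (rule sum.shift_bounds_nat_ivl)
  finally show ?thesis by (simp add: lessThan_atLeast0 add.commute)
qed

lemma inv_cutz:
  assumes A: "A \<in> carrier_mat n n" and H: "H \<in> carrier_mat n n" and AH: "A * H = 1\<^sub>m n"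
    and cA: "cutz n m A"
  shows "cutz n m H"
proof (cases "m \<le> n")
  case False thus ?thesis unfolding cutz_def by auto
next
  case mn: True
  define d where "d = n - m"
  define A22 where "A22 = mat d d (\<lambda>(i,j). A $$ (m+i, m+j))"
  define H22 where "H22 = mat d d (\<lambda>(i,j). H $$ (m+i, m+j))"
  define H21 where "H21 = mat d m (\<lambda>(i,j). H $$ (m+i, j))"
  have c: "A22 \<in> carrier_mat d d" "H22 \<in> carrier_mat d d" "H21 \<in> carrier_mat d m"
    unfolding A22_def H22_def H21_def by auto
  have key: "\<And>i j. i < d \<Longrightarrow> j < n \<Longrightarrow> (\<Sum>k<d. A $$ (m+i, m+k) * H $$ (m+k, j)) = (A * H) $$ (m+i, j)"
  proof -
    fix i j assume ij: "i < d" "j < n"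
    have "(A * H) $$ (m+i, j) = (\<Sum>k<n. A $$ (m+i,k) * H $$ (k,j))"
      using ij A H d_def by (intro mult_entry) auto
    also have "\<dots> = (\<Sum>k<n-m. A $$ (m+i,m+k) * H $$ (m+k,j))"
      using cA ij d_def mn by (intro sum_shift_zero) (auto simp: cutz_def)
    finally show "(\<Sum>k<d. A $$ (m+i, m+k) * H $$ (m+k, j)) = (A * H) $$ (m+i, j)"
      using d_def by simp
  qed
  have "A22 * H22 = 1\<^sub>m d"
  proof (rule eq_matI)
    fix i j assume "i < dim_row (1\<^sub>m d)" "j < dim_col (1\<^sub>m d)"
    hence ij: "i < d" "j < d" by auto
    have "(A22 * H22) $$ (i,j) = (\<Sum>k<d. A22 $$ (i,k) * H22 $$ (k,j))"
      using c ij by (intro mult_entry) auto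
    also have "\<dots> = (\<Sum>k<d. A $$ (m+i, m+k) * H $$ (m+k, m+j))"
      using ij unfolding A22_def H22_def by (intro sum.cong) auto
    also have "\<dots> = (A * H) $$ (m+i, m+j)" using key ij d_def by auto
    also have "\<dots> = 1\<^sub>m d $$ (i,j)" using AH ij d_def by auto
    finally show "(A22 * H22) $$ (i,j) = 1\<^sub>m d $$ (i,j)" .
  qed (use c in auto)
  hence HA: "H22 * A22 = 1\<^sub>m d" using mat_mult_left_right_inverse c by blast
  have AH21: "A22 * H21 = 0\<^sub>m d m"
  proof (rule eq_matI)
    fix i j assume "i < dim_row (0\<^sub>m d m)" "j < dim_col (0\<^sub>m d m)"
    hence ij: "i < d" "j < m" by auto
    have "(A22 * H21) $$ (i,j) = (\<Sum>k<d. A22 $$ (i,k) * H21 $$ (k,j))"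
      using c ij by (auto simp: scalar_prod_def lessThan_atLeast0 intro!: sum.cong)
    also have "\<dots> = (\<Sum>k<d. A $$ (m+i, m+k) * H $$ (m+k, j))"
      using ij unfolding A22_def H21_def by (intro sum.cong) auto
    also have "\<dots> = (A * H) $$ (m+i, j)" using key ij d_def mn by auto
    also have "\<dots> = 0" using AH ij d_def mn by auto
    finally show "(A22 * H21) $$ (i,j) = 0\<^sub>m d m $$ (i,j)" using ij by simp
  qed (use c in auto)
  have "H21 = (H22 * A22) * H21" using HA c by simp
  also have "\<dots> = H22 * (A22 * H21)" using c by (simp add: assoc_mult_mat)
  also have "\<dots> = 0\<^sub>m d m" using AH21 c by simp
  finally have H21z: "H21 = 0\<^sub>m d m" .
  show ?thesis unfolding cutz_def
  proof (intro allI impI)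
    fix k c assume kc: "c < m" "m \<le> k" "k < n"
    have "H21 $$ (k - m, c) = 0" using H21z kc d_def by simp
    thus "H $$ (k,c) = 0" using kc d_def unfolding H21_def by simp
  qed
qed

lemma inv_cutzl:
  assumes A: "A \<in> carrier_mat n n" and H: "H \<in> carrier_mat n n" and AH: "A * H = 1\<^sub>m n"
    and cA: "cutzl n m A"
  shows "cutzl n m H"
proof -
  have HA: "H * A = 1\<^sub>m n" using mat_mult_left_right_inverse A H AH by blast
  have AT: "transpose_mat A \<in> carrier_mat n n" using A by simp
  have HT: "transpose_mat H \<in> carrier_mat n n" using H by simp
  have e: "transpose_mat A * transpose_mat H = 1\<^sub>m n"
    using HA A H by (metis transpose_mult transpose_one)
  have c: "cutz n m (transpose_mat A)" using cA A unfolding cutz_def cutzl_def by auto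
  have "cutz n m (transpose_mat H)" by (rule inv_cutz[OF AT HT e c])
  show ?thesis unfolding cutzl_def
  proof (intro allI impI)
    fix k c assume kc: "k < m" "m \<le> c" "c < n"
    have "transpose_mat H $$ (c,k) = 0" using \<open>cutz n m (transpose_mat H)\<close> kc unfolding cutz_def by blast
    thus "H $$ (k,c) = 0" using H kc by simp
  qed
qed


abbreviation iv :: "(nat \<Rightarrow> nat) \<Rightarrow> nat \<Rightarrow> nat" where "iv u \<equiv> inv_into UNIV u"

abbreviation pn :: "nat \<Rightarrow> (nat \<Rightarrow> nat) \<Rightarrow> bool" where "pn n u \<equiv> u permutes {0..<n}"

lemma perm_mat_carrier[simp]: "perm_mat n w \<in> carrier_mat n n"
  unfolding perm_mat_def by simp

lemma perm_mat_dims[simp]: "dim_row (perm_mat n w) = n" "dim_col (perm_mat n w) = n"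
  unfolding perm_mat_def by simp_all

lemma perm_mat_entry[simp]: "i < n \<Longrightarrow> j < n \<Longrightarrow> perm_mat n w $$ (i,j) = (if i = w j then 1 else 0)"
  unfolding perm_mat_def by simp

lemma pn_lt: "pn n u \<Longrightarrow> j < n \<Longrightarrow> u j < n"
  using permutes_in_image[of u "{0..<n}" j] by auto

lemma pn_inv_lt: "pn n u \<Longrightarrow> j < n \<Longrightarrow> iv u j < n"
  using pn_lt[OF permutes_inv] by blast

lemma perm_mult_left:
  assumes u: "pn n u" and A: "A \<in> carrier_mat n n" and ij: "i < n" "j < n"
  shows "(perm_mat n u * A) $$ (i,j) = A $$ (iv u i, j)"
proof -
  have "(perm_mat n u * A) $$ (i,j) = (\<Sum>k<n. perm_mat n u $$ (i,k) * A $$ (k,j))"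
    using A ij by (intro mult_entry) auto
  also have "\<dots> = perm_mat n u $$ (i,iv u i) * A $$ (iv u i,j)"
  proof (rule sum_single)
    show "iv u i \<in> {..<n}" using pn_inv_lt[OF u ij(1)] by auto
    fix k assume "k \<in> {..<n}" "k \<noteq> iv u i"
    hence "i \<noteq> u k" using permutes_inverses[OF u] by metis
    thus "perm_mat n u $$ (i,k) * A $$ (k,j) = 0" using \<open>k \<in> {..<n}\<close> ij by simp
  qed simp
  also have "\<dots> = A $$ (iv u i, j)"
    using ij pn_inv_lt[OF u ij(1)] permutes_inverses[OF u] by simp
  finally show ?thesis .
qed

lemma perm_mult_right:
  assumes u: "pn n u" and A: "A \<in> carrier_mat n n" and ij: "i < n" "j < n"
  shows "(A * perm_mat n u) $$ (i,j) = A $$ (i, u j)"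
proof -
  have "(A * perm_mat n u) $$ (i,j) = (\<Sum>k<n. A $$ (i,k) * perm_mat n u $$ (k,j))"
    using A ij by (intro mult_entry) auto
  also have "\<dots> = A $$ (i,u j) * perm_mat n u $$ (u j,j)"
  proof (rule sum_single)
    show "u j \<in> {..<n}" using pn_lt[OF u ij(2)] by auto
    fix k assume "k \<in> {..<n}" "k \<noteq> u j"
    thus "A $$ (i,k) * perm_mat n u $$ (k,j) = 0" using ij by simp
  qed simp
  also have "\<dots> = A $$ (i, u j)"
    using ij pn_lt[OF u ij(2)] by simp
  finally show ?thesis .
qed

lemma perm_mat_comp:
  assumes u: "pn n u" and v: "pn n v"
  shows "perm_mat n u * perm_mat n v = perm_mat n (u \<circ> v)"
proof (rule eq_matI)
  fix i j assume "i < dim_row (perm_mat n (u \<circ> v))" "j < dim_col (perm_mat n (u \<circ> v))"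
  hence ij: "i < n" "j < n" by auto
  have "(perm_mat n u * perm_mat n v) $$ (i,j) = perm_mat n v $$ (iv u i, j)"
    using perm_mult_left[OF u _ ij] by simp
  also have "\<dots> = (if iv u i = v j then 1 else 0)" using ij pn_inv_lt[OF u ij(1)] by simp
  also have "\<dots> = perm_mat n (u \<circ> v) $$ (i,j)"
    using ij permutes_inv_eq[OF u] by auto
  finally show "(perm_mat n u * perm_mat n v) $$ (i,j) = perm_mat n (u \<circ> v) $$ (i,j)" .
qed auto

lemma perm_mat_id: "perm_mat n id = 1\<^sub>m n"
  by (rule eq_matI) auto

lemma perm_mat_inv:
  assumes u: "pn n u"
  shows "perm_mat n u * perm_mat n (iv u) = 1\<^sub>m n" "perm_mat n (iv u) * perm_mat n u = 1\<^sub>m n"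
  using perm_mat_comp[OF u permutes_inv[OF u]] perm_mat_comp[OF permutes_inv[OF u] u]
    permutes_inv_o[OF u] perm_mat_id by auto

lemma inv_mat_GL:
  assumes "A \<in> carrier_mat n n" "B \<in> carrier_mat n n" "A * B = 1\<^sub>m n"
  shows "A \<in> GL n"
proof -
  have "det A * det B = 1" using det_mult[OF assms(1,2)] assms(3) by simp
  hence "det A \<noteq> 0" by auto
  thus ?thesis using GL_det assms unfolding GL_def by auto
qed

lemma perm_mat_GL: "pn n u \<Longrightarrow> perm_mat n u \<in> GL n"
  using inv_mat_GL[OF perm_mat_carrier perm_mat_carrier perm_mat_inv(1)] by blast

lemma GL_mult: "A \<in> GL n \<Longrightarrow> B \<in> GL n \<Longrightarrow> A * B \<in> GL n"
proof -
  assume a: "A \<in> GL n" "B \<in> GL n"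
  hence c: "A \<in> carrier_mat n n" "B \<in> carrier_mat n n" "det A \<noteq> 0" "det B \<noteq> 0"
    unfolding GL_def using GL_det by auto
  have "det (A * B) \<noteq> 0" using det_mult[OF c(1,2)] c(3,4) by simp
  moreover have "A * B \<in> carrier_mat n n" using c by simp
  ultimately show ?thesis unfolding GL_def using GL_det by blast
qed

lemma GL_carrier: "A \<in> GL n \<Longrightarrow> A \<in> carrier_mat n n"
  unfolding GL_def by auto

lemma GL_detD: "A \<in> GL n \<Longrightarrow> det A \<noteq> 0"
  unfolding GL_def using GL_det by auto

lemma Borel_iff: "b \<in> Borel n \<longleftrightarrow> b \<in> GL n \<and> (\<forall>m. cutz n m b)"
proof
  assume "b \<in> Borel n" thus "b \<in> GL n \<and> (\<forall>m. cutz n m b)" unfolding Borel_def cutz_def by auto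
next
  assume a: "b \<in> GL n \<and> (\<forall>m. cutz n m b)"
  have "b $$ (i,j) = 0" if "j < i" "i < n" for i j
    using a that unfolding cutz_def by (meson order_refl)
  thus "b \<in> Borel n" using a unfolding Borel_def by auto
qed

lemma Borel_minus_iff: "b \<in> Borel_minus n \<longleftrightarrow> b \<in> GL n \<and> (\<forall>m. cutzl n m b)"
proof
  assume "b \<in> Borel_minus n" thus "b \<in> GL n \<and> (\<forall>m. cutzl n m b)" unfolding Borel_minus_def cutzl_def by auto
next
  assume a: "b \<in> GL n \<and> (\<forall>m. cutzl n m b)"
  have "b $$ (i,j) = 0" if "i < j" "j < n" for i j
    using a that unfolding cutzl_def by (meson order_refl)
  thus "b \<in> Borel_minus n" using a unfolding Borel_minus_def by auto
qed

lemma Borel_mult: "A \<in> Borel n \<Longrightarrow> B \<in> Borel n \<Longrightarrow> A * B \<in> Borel n"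
  unfolding Borel_iff using GL_mult cutz_mult GL_carrier by metis

lemma Borel_minus_mult: "A \<in> Borel_minus n \<Longrightarrow> B \<in> Borel_minus n \<Longrightarrow> A * B \<in> Borel_minus n"
  unfolding Borel_minus_iff using GL_mult cutzl_mult GL_carrier by metis

lemma one_GL: "1\<^sub>m n \<in> GL n"
  unfolding GL_def using GL_det[of "1\<^sub>m n" n] by simp

lemma one_Borel: "1\<^sub>m n \<in> Borel n"
  unfolding Borel_def using one_GL by auto

lemma one_Borel_minus: "1\<^sub>m n \<in> Borel_minus n"
  unfolding Borel_minus_def using one_GL by auto

lemma Borel_inv:
  assumes "b \<in> Borel n"
  shows "minv n b \<in> Borel n"
proof -
  have g: "b \<in> GL n" using assms unfolding Borel_def by auto
  note mp = minv_props[OF g]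
  have "cutz n m (minv n b)" for m
    using inv_cutz[OF GL_carrier[OF g] mp(1) mp(3)] assms unfolding Borel_iff by auto
  moreover have "minv n b \<in> GL n" using inv_mat_GL[OF mp(1) GL_carrier[OF g] mp(2)] .
  ultimately show ?thesis unfolding Borel_iff by auto
qed

lemma Borel_minus_inv:
  assumes "b \<in> Borel_minus n"
  shows "minv n b \<in> Borel_minus n"
proof -
  have g: "b \<in> GL n" using assms unfolding Borel_minus_def by auto
  note mp = minv_props[OF g]
  have "cutzl n m (minv n b)" for m
    using inv_cutzl[OF GL_carrier[OF g] mp(1) mp(3)] assms unfolding Borel_minus_iff by auto
  moreover have "minv n b \<in> GL n" using inv_mat_GL[OF mp(1) GL_carrier[OF g] mp(2)] .
  ultimately show ?thesis unfolding Borel_minus_iff by auto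
qed


definition nzv :: "nat \<Rightarrow> (nat \<Rightarrow> complex) \<Rightarrow> bool" where
  "nzv n v \<longleftrightarrow> (\<exists>j<n. v j \<noteq> 0)"

definition lead :: "nat \<Rightarrow> (nat \<Rightarrow> complex) \<Rightarrow> nat" where
  "lead n v = (LEAST j. j < n \<and> v j \<noteq> 0)"

lemma lead_props:
  assumes "nzv n v"
  shows "lead n v < n" "v (lead n v) \<noteq> 0" "\<And>j. j < lead n v \<Longrightarrow> v j = 0"
proof -
  obtain j where j: "j < n \<and> v j \<noteq> 0" using assms unfolding nzv_def by auto
  have "lead n v < n \<and> v (lead n v) \<noteq> 0" unfolding lead_def by (rule LeastI[of _ j]) (use j in auto)
  thus "lead n v < n" "v (lead n v) \<noteq> 0" by auto
  fix i assume "i < lead n v"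
  hence "\<not> (i < n \<and> v i \<noteq> 0)" unfolding lead_def by (rule not_less_Least)
  thus "v i = 0" using \<open>i < lead n v\<close> \<open>lead n v < n\<close> by auto
qed

lemma lead_eqI:
  assumes "t < n" "v t \<noteq> 0" "\<And>j. j < t \<Longrightarrow> v j = 0"
  shows "lead n v = t" "nzv n v"
proof -
  show "nzv n v" using assms unfolding nzv_def by auto
  show "lead n v = t" unfolding lead_def
  proof (rule Least_equality)
    show "t < n \<and> v t \<noteq> 0" using assms by auto
    fix y assume "y < n \<and> v y \<noteq> 0"
    thus "t \<le> y" using assms(3) by (metis not_le)
  qed
qed

lemma reduce:
  fixes y :: "nat \<Rightarrow> nat \<Rightarrow> complex"
  shows "\<forall>v. (\<forall>j < n - d. v j = 0) \<longrightarrow> (\<exists>\<gamma>. \<not> nzv n (\<lambda>j. v j - (\<Sum>l<i. \<gamma> l * y l j)) \<or>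
      (\<forall>l<i. nzv n (y l) \<longrightarrow> lead n (y l) \<noteq> lead n (\<lambda>j. v j - (\<Sum>l<i. \<gamma> l * y l j))))"
proof (induction d)
  case 0
  show ?case
  proof (intro allI impI)
    fix v :: "nat \<Rightarrow> complex" assume "\<forall>j < n - 0. v j = 0"
    hence "\<not> nzv n (\<lambda>j. v j - (\<Sum>l<i. 0 * y l j))" unfolding nzv_def by auto
    thus "\<exists>\<gamma>. \<not> nzv n (\<lambda>j. v j - (\<Sum>l<i. \<gamma> l * y l j)) \<or>
      (\<forall>l<i. nzv n (y l) \<longrightarrow> lead n (y l) \<noteq> lead n (\<lambda>j. v j - (\<Sum>l<i. \<gamma> l * y l j)))"
      by (intro exI[of _ "\<lambda>_. 0"]) auto
  qed
next
  case (Suc d)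
  show ?case
  proof (intro allI impI)
    fix v :: "nat \<Rightarrow> complex" assume v0: "\<forall>j < n - Suc d. v j = 0"
    show "\<exists>\<gamma>. \<not> nzv n (\<lambda>j. v j - (\<Sum>l<i. \<gamma> l * y l j)) \<or>
      (\<forall>l<i. nzv n (y l) \<longrightarrow> lead n (y l) \<noteq> lead n (\<lambda>j. v j - (\<Sum>l<i. \<gamma> l * y l j)))"
    proof (cases "n \<le> d \<or> v (n - Suc d) = 0")
      case True
      hence "\<forall>j < n - d. v j = 0" using v0
        by (metis Suc_diff_Suc diff_is_0_eq' less_Suc_eq not_less_zero not_le)
      thus ?thesis using Suc.IH by blast
    next
      case False
      define t where "t = n - Suc d"
      have t: "t < n" "Suc t = n - d" "v t \<noteq> 0" using False unfolding t_def by auto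
      have vz: "\<And>j. j < t \<Longrightarrow> v j = 0" using v0 t_def by auto
      show ?thesis
      proof (cases "\<exists>l<i. nzv n (y l) \<and> lead n (y l) = t")
        case False
        have "lead n (\<lambda>j. v j - (\<Sum>l<i. 0 * y l j)) = t"
          by (rule lead_eqI) (use t vz in auto)
        thus ?thesis using False by (intro exI[of _ "\<lambda>_. 0"]) auto
      next
        case True
        then obtain l0 where l0: "l0 < i" "nzv n (y l0)" "lead n (y l0) = t" by auto
        note lp = lead_props[OF l0(2), unfolded l0(3)]
        define c where "c = v t / y l0 t"
        define v1 where "v1 = (\<lambda>j. v j - c * y l0 j)"
        have "\<forall>j < n - d. v1 j = 0"
        proof (intro allI impI)
          fix j assume "j < n - d"
          hence "j < t \<or> j = t" using t by auto
          thus "v1 j = 0" using vz lp unfolding v1_def c_def by auto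
        qed
        then obtain \<gamma>1 where g1: "\<not> nzv n (\<lambda>j. v1 j - (\<Sum>l<i. \<gamma>1 l * y l j)) \<or>
          (\<forall>l<i. nzv n (y l) \<longrightarrow> lead n (y l) \<noteq> lead n (\<lambda>j. v1 j - (\<Sum>l<i. \<gamma>1 l * y l j)))"
          using Suc.IH by blast
        define \<gamma> where "\<gamma> = (\<lambda>l. \<gamma>1 l + (if l = l0 then c else 0))"
        have eq: "(\<lambda>j. v j - (\<Sum>l<i. \<gamma> l * y l j)) = (\<lambda>j. v1 j - (\<Sum>l<i. \<gamma>1 l * y l j))"
        proof
          fix j
          have "(\<Sum>l<i. \<gamma> l * y l j) = (\<Sum>l<i. \<gamma>1 l * y l j) + (\<Sum>l<i. (if l = l0 then c else 0) * y l j)"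
            unfolding \<gamma>_def by (simp add: distrib_right sum.distrib)
          also have "(\<Sum>l<i. (if l = l0 then c else 0) * y l j) = (\<Sum>l<i. if l = l0 then c * y l0 j else 0)"
            by (intro sum.cong) auto
          also have "\<dots> = c * y l0 j" using l0(1) by simp
          finally show "v j - (\<Sum>l<i. \<gamma> l * y l j) = v1 j - (\<Sum>l<i. \<gamma>1 l * y l j)"
            unfolding v1_def by simp
        qed
        show ?thesis using g1 unfolding eq[symmetric] by blast
      qed
    qed
  qed
qed

lemma det_zero_row:
  fixes A :: "complex mat"
  assumes A: "A \<in> carrier_mat n n" and k: "k < n" and z: "\<And>j. j < n \<Longrightarrow> A $$ (k,j) = 0"
  shows "det A = 0"
proof -
  have "det A = (\<Sum>p\<in>{p. p permutes {0..<n}}. signof p * (\<Prod>i = 0..<n. A $$ (i, p i)))"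
    using det_def'[OF A] .
  also have "\<dots> = 0"
  proof (intro sum.neutral ballI)
    fix p assume "p \<in> {p. p permutes {0..<n}}"
    hence "p k < n" using pn_lt k by auto
    hence "(\<Prod>i = 0..<n. A $$ (i, p i)) = 0" using k z by (intro prod_zero bexI[of _ k]) auto
    thus "signof p * (\<Prod>i = 0..<n. A $$ (i, p i)) = 0" by simp
  qed
  finally show ?thesis .
qed

lemma det_zero_col:
  fixes A :: "complex mat"
  assumes A: "A \<in> carrier_mat n n" and k: "k < n" and z: "\<And>j. j < n \<Longrightarrow> A $$ (j,k) = 0"
  shows "det A = 0"
proof -
  have "det A = det (transpose_mat A)" using det_transpose[OF A] by simp
  also have "\<dots> = 0" using A k z by (intro det_zero_row[of _ n k]) auto
  finally show ?thesis .
qed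

lemma rows_construct:
  fixes g :: "complex mat"
  shows "i \<le> n \<Longrightarrow> \<exists>y \<alpha>. (\<forall>k<i. \<forall>j. g $$ (k,j) = y k j + (\<Sum>l<k. \<alpha> k l * y l j)) \<and>
     (\<forall>l<i. \<forall>l'<i. l \<noteq> l' \<longrightarrow> nzv n (y l) \<longrightarrow> nzv n (y l') \<longrightarrow> lead n (y l) \<noteq> lead n (y l'))"
proof (induction i)
  case 0 thus ?case by auto
next
  case (Suc i)
  then obtain y \<alpha> where IH: "\<forall>k<i. \<forall>j. g $$ (k,j) = y k j + (\<Sum>l<k. \<alpha> k l * y l j)"
     "\<forall>l<i. \<forall>l'<i. l \<noteq> l' \<longrightarrow> nzv n (y l) \<longrightarrow> nzv n (y l') \<longrightarrow> lead n (y l) \<noteq> lead n (y l')"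
    by auto
  have "\<exists>\<gamma>. \<not> nzv n (\<lambda>j. g $$ (i,j) - (\<Sum>l<i. \<gamma> l * y l j)) \<or>
      (\<forall>l<i. nzv n (y l) \<longrightarrow> lead n (y l) \<noteq> lead n (\<lambda>j. g $$ (i,j) - (\<Sum>l<i. \<gamma> l * y l j)))"
    using spec[OF reduce[of n n y i], of "\<lambda>j. g $$ (i,j)"] by simp
  then obtain \<gamma> where ga: "\<not> nzv n (\<lambda>j. g $$ (i,j) - (\<Sum>l<i. \<gamma> l * y l j)) \<or>
      (\<forall>l<i. nzv n (y l) \<longrightarrow> lead n (y l) \<noteq> lead n (\<lambda>j. g $$ (i,j) - (\<Sum>l<i. \<gamma> l * y l j)))"
    by blast
  define y' where "y' = y(i := (\<lambda>j. g $$ (i,j) - (\<Sum>l<i. \<gamma> l * y l j)))"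
  define \<alpha>' where "\<alpha>' = \<alpha>(i := \<gamma>)"
  have 1: "\<forall>k<Suc i. \<forall>j. g $$ (k,j) = y' k j + (\<Sum>l<k. \<alpha>' k l * y' l j)"
  proof (intro allI impI)
    fix k j assume "k < Suc i"
    show "g $$ (k,j) = y' k j + (\<Sum>l<k. \<alpha>' k l * y' l j)"
    proof (cases "k < i")
      case True
      have "(\<Sum>l<k. \<alpha>' k l * y' l j) = (\<Sum>l<k. \<alpha> k l * y l j)"
        using True unfolding y'_def \<alpha>'_def by (intro sum.cong) auto
      thus ?thesis using IH(1) True unfolding y'_def by auto
    next
      case False
      hence k: "k = i" using \<open>k < Suc i\<close> by auto
      have "(\<Sum>l<k. \<alpha>' k l * y' l j) = (\<Sum>l<i. \<gamma> l * y l j)"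
        using k unfolding y'_def \<alpha>'_def by (intro sum.cong) auto
      thus ?thesis using k unfolding y'_def by simp
    qed
  qed
  have 2: "\<forall>l<Suc i. \<forall>l'<Suc i. l \<noteq> l' \<longrightarrow> nzv n (y' l) \<longrightarrow> nzv n (y' l') \<longrightarrow> lead n (y' l) \<noteq> lead n (y' l')"
  proof (intro allI impI)
    fix l l' assume a: "l < Suc i" "l' < Suc i" "l \<noteq> l'" "nzv n (y' l)" "nzv n (y' l')"
    show "lead n (y' l) \<noteq> lead n (y' l')"
    proof (cases "l = i")
      case True
      hence li: "l' < i" using a by auto
      have "nzv n (y' i)" using a True by simp
      hence "\<forall>l<i. nzv n (y l) \<longrightarrow> lead n (y l) \<noteq> lead n (y' i)" using ga unfolding y'_def by simp
      moreover have "y' l' = y l'" using li unfolding y'_def by simp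
      ultimately show ?thesis using li a True by metis
    next
      case False
      show ?thesis
      proof (cases "l' = i")
        case True
        hence li: "l < i" using a False by auto
        have "nzv n (y' i)" using a True by simp
        hence "\<forall>l<i. nzv n (y l) \<longrightarrow> lead n (y l) \<noteq> lead n (y' i)" using ga unfolding y'_def by simp
        moreover have "y' l = y l" using li unfolding y'_def by simp
        ultimately show ?thesis using li a True by metis
      next
        case False
        thus ?thesis using IH(2) a \<open>l \<noteq> i\<close> unfolding y'_def by auto
      qed
    qed
  qed
  show ?case using 1 2 by blast
qed

lemma lower_det1:
  fixes L :: "complex mat"
  assumes "L = mat n n (\<lambda>(k,l). if l < k then \<alpha> k l else if l = k then 1 else 0)"
  shows "det L = 1"
proof -
  have "det L = prod_list (diag_mat L)"
    by (rule det_lower_triangular[of n]) (use assms in auto)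
  also have "diag_mat L = map (\<lambda>_. 1) [0..<n]"
    using assms unfolding diag_mat_def by (auto intro!: map_cong)
  also have "prod_list (map (\<lambda>_. 1::complex) [0..<n]) = 1" by (induction n) auto
  finally show ?thesis .
qed

theorem bruhat_minus:
  assumes g: "g \<in> GL n"
  shows "\<exists>L u U. L \<in> Borel_minus n \<and> pn n u \<and> U \<in> Borel n \<and> g = L * perm_mat n u * U"
proof -
  have gc: "g \<in> carrier_mat n n" and gd: "det g \<noteq> 0" using g GL_carrier GL_detD by auto
  obtain y \<alpha> where Y: "\<forall>k<n. \<forall>j. g $$ (k,j) = y k j + (\<Sum>l<k. \<alpha> k l * y l j)"
     "\<forall>l<n. \<forall>l'<n. l \<noteq> l' \<longrightarrow> nzv n (y l) \<longrightarrow> nzv n (y l') \<longrightarrow> lead n (y l) \<noteq> lead n (y l')"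
    using rows_construct[of n n g] by auto
  define L where "L = mat n n (\<lambda>(k,l). if l < k then \<alpha> k l else if l = k then 1 else 0)"
  define X where "X = mat n n (\<lambda>(k,j). y k j)"
  have Lc: "L \<in> carrier_mat n n" and Xc: "X \<in> carrier_mat n n" unfolding L_def X_def by auto
  have dL: "det L = 1" using lower_det1 L_def by blast
  have gLX: "g = L * X"
  proof (rule eq_matI)
    fix k j assume "k < dim_row (L * X)" "j < dim_col (L * X)"
    hence kj: "k < n" "j < n" using Lc Xc by auto
    define f where "f = (\<lambda>l. L $$ (k,l) * X $$ (l,j))"
    have "(L * X) $$ (k,j) = (\<Sum>l<n. f l)" unfolding f_def using Lc Xc kj by (intro mult_entry) auto
    also have "\<dots> = (\<Sum>l<Suc k. f l)"
      by (rule sum.mono_neutral_right) (use kj in \<open>auto simp: f_def L_def\<close>)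
    also have "\<dots> = (\<Sum>l<k. f l) + f k" by simp
    also have "(\<Sum>l<k. f l) = (\<Sum>l<k. \<alpha> k l * y l j)"
      using kj by (intro sum.cong) (auto simp: f_def L_def X_def)
    also have "f k = y k j" using kj by (simp add: f_def L_def X_def)
    finally show "g $$ (k,j) = (L * X) $$ (k,j)" using Y(1) kj by (simp add: add.commute)
  qed (use gc Lc Xc in auto)
  have dX: "det X \<noteq> 0" using det_mult[OF Lc Xc] gd dL gLX by simp
  have nz: "nzv n (y k)" if "k < n" for k
  proof (rule ccontr)
    assume "\<not> nzv n (y k)"
    hence "det X = 0" using that unfolding nzv_def
      by (intro det_zero_row[OF Xc that]) (auto simp: X_def)
    thus False using dX by simp
  qed
  define c where "c = (\<lambda>k. if k < n then lead n (y k) else k)"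
  have cinj: "inj_on c {0..<n}"
  proof (rule inj_onI)
    fix x z assume "x \<in> {0..<n}" "z \<in> {0..<n}" "c x = c z"
    thus "x = z" using Y(2) nz unfolding c_def by (metis atLeastLessThan_iff)
  qed
  have cim: "c ` {0..<n} \<subseteq> {0..<n}" using nz lead_props unfolding c_def by auto
  have "c ` {0..<n} = {0..<n}" using endo_inj_surj[OF _ cim cinj] by simp
  hence "bij_betw c {0..<n} {0..<n}" using cinj unfolding bij_betw_def by auto
  hence cp: "pn n c" by (rule bij_imp_permutes) (auto simp: c_def)
  define u where "u = iv c"
  have up: "pn n u" unfolding u_def using permutes_inv[OF cp] .
  define U where "U = mat n n (\<lambda>(a,j). y (u a) j)"
  have Uc: "U \<in> carrier_mat n n" unfolding U_def by auto
  have XPU: "X = perm_mat n u * U"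
  proof (rule eq_matI)
    fix i j assume "i < dim_row (perm_mat n u * U)" "j < dim_col (perm_mat n u * U)"
    hence ij: "i < n" "j < n" using Uc by auto
    have "(perm_mat n u * U) $$ (i,j) = U $$ (iv u i, j)" using perm_mult_left[OF up Uc ij] .
    also have "\<dots> = y (u (iv u i)) j" unfolding U_def using pn_inv_lt[OF up ij(1)] ij by simp
    also have "\<dots> = y i j" using permutes_inverses[OF up] by simp
    finally show "X $$ (i,j) = (perm_mat n u * U) $$ (i,j)" unfolding X_def using ij by simp
  qed (use Xc Uc in auto)
  have Uup: "U $$ (a,j) = 0" if "j < a" "a < n" for a j
  proof -
    have ua: "u a < n" using pn_lt[OF up that(2)] .
    have "c (u a) = a" unfolding u_def using permutes_inverses[OF cp] by simp
    hence "lead n (y (u a)) = a" using ua unfolding c_def by simp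
    hence "y (u a) j = 0" using lead_props(3)[OF nz[OF ua]] that by simp
    thus ?thesis unfolding U_def using that by simp
  qed
  have Pc: "perm_mat n u \<in> carrier_mat n n" by simp
  have gdec: "g = L * perm_mat n u * U" using gLX XPU assoc_mult_mat[OF Lc Pc Uc] by simp
  have "det g = det L * det (perm_mat n u) * det U"
    using gdec det_mult Lc Pc Uc by (metis mult_carrier_mat)
  hence "det U \<noteq> 0" using gd by auto
  hence "U \<in> GL n" using Uc GL_det[OF Uc] unfolding GL_def by auto
  hence UB: "U \<in> Borel n" using Uup unfolding Borel_def by auto
  have "L \<in> GL n" using dL Lc GL_det[OF Lc] unfolding GL_def by auto
  hence LB: "L \<in> Borel_minus n" unfolding Borel_minus_def L_def by auto
  show ?thesis using LB up UB gdec by blast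
qed

definition w0 :: "nat \<Rightarrow> nat \<Rightarrow> nat" where
  "w0 n = (\<lambda>i. if i < n then n - 1 - i else i)"

lemma w0_invol: "w0 n \<circ> w0 n = id"
  unfolding w0_def by (auto simp: fun_eq_iff)

lemma w0_perm: "pn n (w0 n)"
proof (rule bij_imp_permutes)
  have "inj_on (w0 n) {0..<n}" unfolding w0_def inj_on_def by auto
  moreover have "w0 n ` {0..<n} \<subseteq> {0..<n}" unfolding w0_def by auto
  ultimately show "bij_betw (w0 n) {0..<n} {0..<n}"
    unfolding bij_betw_def using endo_inj_surj by blast
qed (auto simp: w0_def)

lemma w0_inv: "iv (w0 n) = w0 n"
  using w0_invol inv_unique_comp by blast

theorem bruhat_plus:
  assumes g: "g \<in> GL n"
  shows "\<exists>U1 v U2. U1 \<in> Borel n \<and> pn n v \<and> U2 \<in> Borel n \<and> g = U1 * perm_mat n v * U2"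
proof -
  define P where "P = perm_mat n (w0 n)"
  have Pc: "P \<in> carrier_mat n n" unfolding P_def by simp
  have PP: "P * P = 1\<^sub>m n" unfolding P_def
    using perm_mat_comp[OF w0_perm w0_perm] w0_invol perm_mat_id by simp
  have gc: "g \<in> carrier_mat n n" using GL_carrier[OF g] .
  have "P * g \<in> GL n" using GL_mult[OF perm_mat_GL[OF w0_perm] g] unfolding P_def .
  then obtain L u U where d: "L \<in> Borel_minus n" "pn n u" "U \<in> Borel n" "P * g = L * perm_mat n u * U"
    using bruhat_minus by blast
  have Lc: "L \<in> carrier_mat n n" and Uc: "U \<in> carrier_mat n n"
    using d unfolding Borel_minus_def Borel_def GL_def by auto
  have Qc: "perm_mat n u \<in> carrier_mat n n" by simp
  define U1 where "U1 = P * L * P"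
  have U1c: "U1 \<in> carrier_mat n n" unfolding U1_def using Pc Lc by simp
  have PPX: "P * (P * X) = X" if "X \<in> carrier_mat n n" for X
    using assoc_mult_mat[OF Pc Pc that, symmetric] PP left_mult_one_mat[OF that] by simp
  have "g = P * (P * g)" using PPX[OF gc] by simp
  also have "\<dots> = P * (L * perm_mat n u * U)" using d(4) by simp
  also have "\<dots> = U1 * (P * perm_mat n u) * U" unfolding U1_def using Pc Lc Qc Uc PPX
    by (simp add: assoc_mult_mat[of _ n n _ n _ n])
  also have "P * perm_mat n u = perm_mat n (w0 n \<circ> u)" unfolding P_def
    using perm_mat_comp[OF w0_perm d(2)] .
  finally have gd: "g = U1 * perm_mat n (w0 n \<circ> u) * U" .
  have U1GL: "U1 \<in> GL n" unfolding U1_def P_def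
    using GL_mult perm_mat_GL[OF w0_perm] d(1) unfolding Borel_minus_def by blast
  have "U1 $$ (i,j) = 0" if "j < i" "i < n" for i j
  proof -
    have e1: "U1 = P * (L * P)" unfolding U1_def using assoc_mult_mat[OF Pc Lc Pc] .
    have "U1 $$ (i,j) = (L * P) $$ (iv (w0 n) i, j)" unfolding e1 P_def
      by (rule perm_mult_left[OF w0_perm]) (use that Lc in auto)
    also have "\<dots> = L $$ (w0 n i, w0 n j)" unfolding w0_inv P_def
      using perm_mult_right[OF w0_perm Lc] that pn_lt[OF w0_perm] by simp
    also have "\<dots> = 0" using d(1) that unfolding Borel_minus_def w0_def by auto
    finally show ?thesis .
  qed
  hence "U1 \<in> Borel n" using U1GL unfolding Borel_def by auto
  thus ?thesis using gd d(3) permutes_compose[OF d(2) w0_perm] by blast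
qed


definition cutp :: "nat \<Rightarrow> (nat \<Rightarrow> nat) \<Rightarrow> bool" where
  "cutp m u \<longleftrightarrow> (\<forall>j<m. u j < m)"

definition petp :: "nat \<Rightarrow> nat set \<Rightarrow> (nat \<Rightarrow> nat) \<Rightarrow> bool" where
  "petp n J u \<longleftrightarrow> (\<forall>a b. a < n \<longrightarrow> b < n \<longrightarrow> u b = Suc (u a) \<longrightarrow> b < a \<longrightarrow> a = Suc b \<and> a \<in> J)"

definition SJ :: "nat \<Rightarrow> nat set \<Rightarrow> (nat \<Rightarrow> nat) set" where
  "SJ n J = {v. pn n v \<and> (\<forall>m\<in>{1..<n} - J. cutp m v)}"

definition desc_on :: "nat \<Rightarrow> nat set \<Rightarrow> (nat \<Rightarrow> nat) \<Rightarrow> bool" where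
  "desc_on n J v \<longleftrightarrow> (\<forall>k\<in>J \<inter> {1..<n}. v k < v (k-1))"

lemma sr_apply: "simple_refl k x = (if x = k - 1 then k else if x = k then k - 1 else x)"
  unfolding simple_refl_def transpose_def by auto

lemma sr_invol: "simple_refl k (simple_refl k x) = x"
  unfolding simple_refl_def by simp

lemma sr_comp_invol: "simple_refl k \<circ> simple_refl k = id"
  unfolding simple_refl_def by simp

lemma sr_perm: "0 < k \<Longrightarrow> k < n \<Longrightarrow> pn n (simple_refl k)"
  unfolding simple_refl_def by (intro permutes_swap_id) auto

lemma sr_lt: "0 < k \<Longrightarrow> a < b \<Longrightarrow> \<not> (a = k - 1 \<and> b = k) \<Longrightarrow> simple_refl k a < simple_refl k b"
  unfolding sr_apply by auto

lemma sr_cut: "0 < k \<Longrightarrow> k \<noteq> m \<Longrightarrow> cutp m (simple_refl k)"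
  unfolding cutp_def sr_apply by auto

lemma cutp_comp: "cutp m u \<Longrightarrow> cutp m v \<Longrightarrow> cutp m (u \<circ> v)"
  unfolding cutp_def by auto

lemma cut_compl:
  assumes u: "pn n u" and c: "cutp m u" and mj: "m \<le> j" "j < n"
  shows "m \<le> u j"
proof (rule ccontr)
  assume "\<not> m \<le> u j"
  hence uj: "u j < m" by simp
  have "m \<le> n" using mj by simp
  have inj: "inj_on u {0..<m}" using permutes_inj_on[OF u] .
  have im: "u ` {0..<m} \<subseteq> {0..<m}" using c unfolding cutp_def by auto
  have "u ` {0..<m} = {0..<m}" using endo_inj_surj[OF _ im inj] by simp
  then obtain j' where "j' < m" "u j' = u j" using uj by (metis atLeastLessThan_iff imageE le0)
  hence "j' = j" using permutes_inj[OF u] unfolding inj_def by auto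
  thus False using \<open>j' < m\<close> mj by simp
qed

lemma perm_card_less:
  assumes u: "pn n u" and j: "j < n"
  shows "card {a. a < n \<and> u a < u j} = u j"
proof -
  have "bij_betw u {a. a < n \<and> u a < u j} {0..<u j}"
  proof (rule bij_betw_imageI)
    show "inj_on u {a. a < n \<and> u a < u j}" using permutes_inj_on[OF u] .
    show "u ` {a. a < n \<and> u a < u j} = {0..<u j}"
    proof
      show "u ` {a. a < n \<and> u a < u j} \<subseteq> {0..<u j}" by auto
      show "{0..<u j} \<subseteq> u ` {a. a < n \<and> u a < u j}"
      proof
        fix y assume "y \<in> {0..<u j}"
        hence y: "y < u j" by simp
        hence "y < n" using pn_lt[OF u j] by simp
        hence "iv u y < n" using pn_inv_lt[OF u] by simp
        moreover have "u (iv u y) = y" using permutes_inverses[OF u] by simp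
        ultimately show "y \<in> u ` {a. a < n \<and> u a < u j}" using y by (metis (mono_tags) imageI mem_Collect_eq)
      qed
    qed
  qed
  thus ?thesis using bij_betw_same_card by fastforce
qed

lemma asc_cut:
  assumes u: "pn n u" and pt: "petp n J u" and i: "0 < i" "i < n" and asc: "u (i-1) < u i"
  shows "cutp i u"
proof (rule ccontr)
  assume "\<not> cutp i u"
  then obtain j where j: "j < i" "i \<le> u j" unfolding cutp_def by auto
  define A where "A = u ` {0..<i}"
  have finA: "finite A" unfolding A_def by simp
  have cardA: "card A = i" unfolding A_def using card_image[OF permutes_inj_on[OF u]] by simp
  define x where "x = Max A"
  have xA: "x \<in> A" unfolding x_def using finA j by (intro Max_in) (auto simp: A_def)
  have xge: "i \<le> x" unfolding x_def using j finA by (metis A_def Max_ge atLeastLessThan_iff imageI le0 order_trans)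
  have xn: "x < n" using xA u i unfolding A_def using pn_lt by auto
  have "\<exists>v<x. v \<notin> A"
  proof (rule ccontr)
    assume "\<not> (\<exists>v<x. v \<notin> A)"
    hence "{0..x} \<subseteq> A" using xA by (auto simp: le_less)
    hence "card {0..x} \<le> card A" using finA card_mono by blast
    thus False using cardA xge by simp
  qed
  define V where "V = {v. v < x \<and> v \<notin> A}"
  have finV: "finite V" "V \<noteq> {}" unfolding V_def using \<open>\<exists>v<x. v \<notin> A\<close> by auto
  define v where "v = Max V"
  have vV: "v < x" "v \<notin> A" using Max_in[OF finV] unfolding v_def V_def by auto
  have sA: "Suc v \<in> A"
  proof (cases "Suc v = x")
    case True thus ?thesis using xA by simp
  next
    case False
    hence "Suc v < x" using vV by simp
    show ?thesis
    proof (rule ccontr)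
      assume "Suc v \<notin> A"
      hence "Suc v \<in> V" using \<open>Suc v < x\<close> unfolding V_def by simp
      hence "Suc v \<le> v" unfolding v_def using Max_ge[OF finV(1)] by simp
      thus False by simp
    qed
  qed
  then obtain a' where a': "a' < i" "u a' = Suc v" unfolding A_def by auto
  define b' where "b' = iv u v"
  have vn: "v < n" using vV xn by simp
  have b': "b' < n" "u b' = v" unfolding b'_def using pn_inv_lt[OF u vn] permutes_inverses[OF u] by auto
  have "\<not> b' < i" using vV b' unfolding A_def by auto
  hence "i \<le> b'" by simp
  have "a' < n" using a' i by simp
  have "b' = Suc a'" using pt b' a' \<open>i \<le> b'\<close> \<open>a' < n\<close> unfolding petp_def by auto
  hence "a' = i - 1" "b' = i" using a' \<open>i \<le> b'\<close> by auto
  thus False using asc a' b' by simp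
qed

lemma desc_J:
  assumes u: "pn n u" and pt: "petp n J u" and k: "0 < k" "k < n" and dsc: "u k < u (k-1)"
  shows "k \<in> J \<and> u (k-1) = Suc (u k)"
proof -
  define x where "x = u k"
  define y where "y = u (k-1)"
  have yn: "y < n" unfolding y_def using pn_lt[OF u] k by simp
  define Z where "Z = {z. x < z \<and> z \<le> y \<and> iv u z < k}"
  have yZ: "y \<in> Z" unfolding Z_def y_def x_def using dsc permutes_inverses[OF u] k by auto
  define z where "z = (LEAST z. z \<in> Z)"
  have zZ: "z \<in> Z" unfolding z_def using yZ by (rule LeastI)
  hence z: "x < z" "z \<le> y" "iv u z < k" unfolding Z_def by auto
  then obtain z' where z': "z = Suc z'" by (cases z) auto
  have zn: "z < n" using z yn by simp
  have "k \<le> iv u z'"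
  proof (cases "z' = x")
    case True thus ?thesis unfolding x_def using permutes_inverses[OF u] by simp
  next
    case False
    hence "x < z'" using z z' by simp
    moreover have "z' \<le> y" using z z' by simp
    moreover have "z' \<notin> Z"
    proof
      assume "z' \<in> Z" hence "z \<le> z'" unfolding z_def by (rule Least_le)
      thus False using z' by simp
    qed
    ultimately show ?thesis unfolding Z_def by auto
  qed
  have a: "iv u z' < n" using pn_inv_lt[OF u] zn z' by simp
  have b: "iv u z < n" using pn_inv_lt[OF u] zn by simp
  have e: "u (iv u z) = Suc (u (iv u z'))" using permutes_inverses[OF u] z' by simp
  have lt: "iv u z < iv u z'" using z(3) \<open>k \<le> iv u z'\<close> by simp
  have "iv u z' = Suc (iv u z) \<and> iv u z' \<in> J"
    using pt a b e lt unfolding petp_def by blast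
  hence 1: "iv u z' = k" "iv u z' \<in> J" using z \<open>k \<le> iv u z'\<close> by auto
  hence "z' = x" unfolding x_def using permutes_inverses[OF u] by metis
  moreover have "iv u z = k - 1" using 1 \<open>iv u z' = Suc (iv u z) \<and> iv u z' \<in> J\<close> by simp
  hence "z = y" unfolding y_def using permutes_inverses[OF u] by metis
  ultimately show ?thesis using 1 z' unfolding x_def y_def by auto
qed

lemma descD: "desc_on n J v \<Longrightarrow> k \<in> J \<Longrightarrow> 0 < k \<Longrightarrow> k < n \<Longrightarrow> v k < v (k-1)"
  unfolding desc_on_def by auto

definition blk :: "nat set \<Rightarrow> nat \<Rightarrow> nat \<Rightarrow> bool" where
  "blk J a b \<longleftrightarrow> (\<forall>m. a < m \<and> m \<le> b \<longrightarrow> m \<in> J)"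

lemma blk_desc:
  assumes v: "desc_on n J v" and ab: "a + Suc d < n" and bl: "blk J a (a + Suc d)"
  shows "v (a + Suc d) < v a"
  using ab bl
proof (induction d)
  case 0
  have "Suc a \<in> J" using 0 unfolding blk_def by auto
  thus ?case using descD[OF v, of "Suc a"] 0 by simp
next
  case (Suc d)
  have "blk J a (a + Suc d)" using Suc.prems unfolding blk_def by auto
  hence 1: "v (a + Suc d) < v a" using Suc by simp
  have "a + Suc (Suc d) \<in> J" using Suc.prems unfolding blk_def by auto
  hence "v (a + Suc (Suc d)) < v (a + Suc d)" using descD[OF v, of "a + Suc (Suc d)"] Suc.prems by simp
  thus ?case using 1 by simp
qed

lemma blk_desc':
  assumes v: "desc_on n J v" and ab: "a < b" "b < n" and bl: "blk J a b"
  shows "v b < v a"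
proof -
  obtain d where "b = a + Suc d" using less_imp_Suc_add[OF ab(1)] by auto
  thus ?thesis using blk_desc[OF v] ab bl by simp
qed

lemma nonblk_asc:
  assumes v: "v \<in> SJ n J" and ab: "a < b" "b < n" and bl: "\<not> blk J a b"
  shows "v a < v b"
proof -
  obtain m where m: "a < m" "m \<le> b" "m \<notin> J" using bl unfolding blk_def by auto
  have "m \<in> {1..<n} - J" using m ab by auto
  hence c: "cutp m v" using v unfolding SJ_def by auto
  hence "v a < m" using m unfolding cutp_def by auto
  moreover have "m \<le> v b" using cut_compl[OF _ c m(2) ab(2)] v unfolding SJ_def by auto
  ultimately show ?thesis by simp
qed

lemma SJ_char:
  assumes v: "v \<in> SJ n J" and d: "desc_on n J v" and j: "j < n"
  shows "v j = card {a. a < n \<and> ((a < j \<and> \<not> blk J a j) \<or> (j < a \<and> blk J j a))}"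
proof -
  have pv: "pn n v" using v unfolding SJ_def by auto
  have "{a. a < n \<and> v a < v j} = {a. a < n \<and> ((a < j \<and> \<not> blk J a j) \<or> (j < a \<and> blk J j a))}"
  proof (intro Collect_cong conj_cong refl)
    fix a assume a: "a < n"
    show "v a < v j \<longleftrightarrow> (a < j \<and> \<not> blk J a j) \<or> (j < a \<and> blk J j a)"
    proof (cases a j rule: linorder_cases)
      case less
      have 1: "blk J a j \<Longrightarrow> v j < v a" using blk_desc'[OF d less j] .
      have 2: "\<not> blk J a j \<Longrightarrow> v a < v j" using nonblk_asc[OF v less j] .
      show ?thesis using 1 2 less by (cases "blk J a j") auto
    next
      case equal thus ?thesis by simp
    next
      case greater
      have 1: "blk J j a \<Longrightarrow> v a < v j" using blk_desc'[OF d greater a] .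
      have 2: "\<not> blk J j a \<Longrightarrow> v j < v a" using nonblk_asc[OF v greater a] .
      show ?thesis using 1 2 greater by (cases "blk J j a") auto
    qed
  qed
  thus ?thesis using perm_card_less[OF pv j] by simp
qed

lemma SJ_unique:
  assumes v: "v \<in> SJ n J" "desc_on n J v" and w: "w \<in> SJ n J" "desc_on n J w"
  shows "v = w"
proof
  fix j
  show "v j = w j"
  proof (cases "j < n")
    case True thus ?thesis using SJ_char[OF v True] SJ_char[OF w True] by simp
  next
    case False
    hence "j \<notin> {0..<n}" by simp
    have "pn n v" "pn n w" using v w unfolding SJ_def by auto
    thus ?thesis using permutes_not_in[of v "{0..<n}" j] permutes_not_in[of w "{0..<n}" j] \<open>j \<notin> {0..<n}\<close> by simp
  qed
qed

definition ascs :: "nat \<Rightarrow> (nat \<Rightarrow> nat) \<Rightarrow> nat" where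
  "ascs n v = card {(a,b). a < b \<and> b < n \<and> v a < v b}"

lemma pairs_finite: "finite {(a,b). a < b \<and> b < (n::nat) \<and> P a b}"
  by (rule finite_subset[of _ "{..<n} \<times> {..<n}"]) auto

lemma ascs_dec:
  assumes k: "0 < k" "k < n" and asc: "v (k-1) < v k"
  shows "ascs n (v \<circ> simple_refl k) < ascs n v"
proof -
  let ?s = "simple_refl k"
  let ?A = "{(a,b). a < b \<and> b < n \<and> v a < v b}"
  let ?A' = "{(a,b). a < b \<and> b < n \<and> (v \<circ> ?s) a < (v \<circ> ?s) b}"
  let ?f = "\<lambda>(a,b). (?s a, ?s b)"
  have fin: "finite ?A" by (rule pairs_finite)
  have inj: "inj_on ?f ?A'" unfolding inj_on_def
    by (auto, metis sr_invol, metis sr_invol)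
  have sub: "?f ` ?A' \<subseteq> ?A - {(k-1,k)}"
  proof
    fix p assume "p \<in> ?f ` ?A'"
    then obtain a b where ab: "a < b" "b < n" "v (?s a) < v (?s b)" "p = (?s a, ?s b)" by auto
    have nk: "\<not> (a = k - 1 \<and> b = k)"
    proof
      assume "a = k - 1 \<and> b = k"
      hence "v (?s a) = v k" "v (?s b) = v (k-1)" using k by (auto simp: sr_apply)
      thus False using ab asc by simp
    qed
    have 1: "?s a < ?s b" using sr_lt[OF k(1) ab(1) nk] .
    have 2: "?s b < n" using ab k by (auto simp: sr_apply)
    have 3: "p \<noteq> (k-1,k)"
    proof
      assume "p = (k-1,k)"
      hence "?s a = k - 1" "?s b = k" using ab by auto
      hence "a = k" "b = k - 1" using k by (auto simp: sr_apply split: if_splits)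
      thus False using ab by simp
    qed
    show "p \<in> ?A - {(k-1,k)}" using 1 2 3 ab by auto
  qed
  have "card ?A' \<le> card (?A - {(k-1,k)})"
    using card_inj_on_le[OF inj sub] fin by simp
  also have "\<dots> < card ?A"
    using fin asc k by (intro card_Diff1_less) auto
  finally show ?thesis unfolding ascs_def by simp
qed

lemma plen_inc:
  assumes k: "0 < k" "k < n" and asc: "p (k-1) < p k"
  shows "perm_length n p < perm_length n (p \<circ> simple_refl k)"
proof -
  let ?s = "simple_refl k"
  let ?A = "{(a,b). a < b \<and> b < n \<and> p b < p a}"
  let ?A' = "{(a,b). a < b \<and> b < n \<and> (p \<circ> ?s) b < (p \<circ> ?s) a}"
  let ?f = "\<lambda>(a,b). (?s a, ?s b)"
  have fin: "finite ?A'" by (rule pairs_finite)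
  have inj: "inj_on ?f ?A" unfolding inj_on_def
    by (auto, metis sr_invol, metis sr_invol)
  have sub: "?f ` ?A \<subseteq> ?A' - {(k-1,k)}"
  proof
    fix q assume "q \<in> ?f ` ?A"
    then obtain a b where ab: "a < b" "b < n" "p b < p a" "q = (?s a, ?s b)" by auto
    have nk: "\<not> (a = k - 1 \<and> b = k)" using ab asc by auto
    have 1: "?s a < ?s b" using sr_lt[OF k(1) ab(1) nk] .
    have 2: "?s b < n" using ab k by (auto simp: sr_apply)
    have 3: "q \<noteq> (k-1,k)"
    proof
      assume "q = (k-1,k)"
      hence "?s a = k - 1" "?s b = k" using ab by auto
      hence "a = k" "b = k - 1" using k by (auto simp: sr_apply split: if_splits)
      thus False using ab by simp
    qed
    have 4: "(p \<circ> ?s) (?s b) < (p \<circ> ?s) (?s a)" using ab by (simp add: sr_invol)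
    show "q \<in> ?A' - {(k-1,k)}" using 1 2 3 4 ab by auto
  qed
  have "(k-1,k) \<in> ?A'" using k asc by (auto simp: sr_apply)
  have "card ?A \<le> card (?A' - {(k-1,k)})"
    using card_inj_on_le[OF inj sub] fin by simp
  also have "\<dots> < card ?A'"
    using fin \<open>(k-1,k) \<in> ?A'\<close> by (intro card_Diff1_less) auto
  finally show ?thesis unfolding perm_length_def by simp
qed

lemma plen_bound: "perm_length n p < Suc (n * n)"
proof -
  have "perm_length n p \<le> card ({..<n} \<times> {..<n})" unfolding perm_length_def
    by (rule card_mono) auto
  thus ?thesis by simp
qed

lemma par_props:
  assumes J: "J \<subseteq> {1..<n}" and p: "p \<in> parabolic J"
  shows "pn n p" "\<forall>m\<in>{1..<n} - J. cutp m p"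
  using p
proof (induction rule: parabolic.induct)
  case id
  { case 1 show ?case using permutes_id[of "{0..<n}"] by (simp add: id_def) }
  { case 2 show ?case unfolding cutp_def by simp }
next
  case (step p i)
  have i: "0 < i" "i < n" using step J by auto
  { case 1 show ?case using permutes_compose[OF step.IH(1) sr_perm[OF i]] . }
  { case 2 show ?case
    proof
      fix m assume m: "m \<in> {1..<n} - J"
      hence "i \<noteq> m" using step.hyps(2) by auto
      hence "cutp m (simple_refl i)" by (rule sr_cut[OF i(1)])
      moreover have "cutp m p" using step.IH(2) m by auto
      ultimately show "cutp m (simple_refl i \<circ> p)" by (rule cutp_comp)
    qed }
qed

lemma par_comp:
  assumes p: "p \<in> parabolic J" and q: "q \<in> parabolic J"
  shows "p \<circ> q \<in> parabolic J"
  using p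
proof (induction rule: parabolic.induct)
  case id thus ?case using q by simp
next
  case (step p i)
  have "simple_refl i \<circ> p \<circ> q = simple_refl i \<circ> (p \<circ> q)" by (simp add: comp_assoc)
  thus ?case using parabolic.step[OF step.IH step.hyps(2)] by metis
qed

lemma sr_par: "k \<in> J \<Longrightarrow> simple_refl k \<in> parabolic J"
  using parabolic.step[OF parabolic.id, of k J] by (simp add: comp_id)

lemma longest_props:
  assumes J: "J \<subseteq> {1..<n}"
  shows "longest n J \<in> SJ n J" "desc_on n J (longest n J)"
proof -
  let ?w = "longest n J"
  have "(\<lambda>p. p \<in> parabolic J) ?w \<and> (\<forall>y. y \<in> parabolic J \<longrightarrow> perm_length n y \<le> perm_length n ?w)"
    unfolding longest_def
    by (rule arg_max_nat_lemma[of _ id]) (use parabolic.id plen_bound in auto)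
  hence w: "?w \<in> parabolic J" "\<And>y. y \<in> parabolic J \<Longrightarrow> perm_length n y \<le> perm_length n ?w" by auto
  show "?w \<in> SJ n J" using par_props[OF J w(1)] unfolding SJ_def by auto
  show "desc_on n J ?w" unfolding desc_on_def
  proof
    fix k assume "k \<in> J \<inter> {1..<n}"
    hence k: "0 < k" "k < n" "k \<in> J" by auto
    have pw: "pn n ?w" using par_props[OF J w(1)] by simp
    have ne: "?w k \<noteq> ?w (k-1)" using permutes_inj[OF pw] k unfolding inj_def by force
    show "?w k < ?w (k-1)"
    proof (rule ccontr)
      assume "\<not> ?w k < ?w (k-1)"
      hence "?w (k-1) < ?w k" using ne by simp
      hence "perm_length n ?w < perm_length n (?w \<circ> simple_refl k)" using plen_inc k by simp
      moreover have "?w \<circ> simple_refl k \<in> parabolic J" using par_comp[OF w(1) sr_par[OF k(3)]] .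
      ultimately show False using w(2) by fastforce
    qed
  qed
qed


definition cellG :: "complex mat set \<Rightarrow> nat \<Rightarrow> (nat \<Rightarrow> nat) \<Rightarrow> complex mat set" where
  "cellG G1 n w = {b1 * perm_mat n w * b2 | b1 b2. b1 \<in> G1 \<and> b2 \<in> Borel n}"

definition clos :: "nat \<Rightarrow> complex mat set \<Rightarrow> complex mat set" where
  "clos n S = {X \<in> carrier_mat n n. mat_fun X \<in> closure (mat_fun ` S)}"

definition Fm :: "nat \<Rightarrow> complex mat \<Rightarrow> complex mat \<Rightarrow> (nat \<Rightarrow> nat \<Rightarrow> complex) \<Rightarrow> (nat \<Rightarrow> nat \<Rightarrow> complex)" where
  "Fm n b1 b2 f = (\<lambda>i j. if i < n \<and> j < n then (\<Sum>k<n. \<Sum>l<n. b1 $$ (i,k) * f k l * b2 $$ (l,j)) else 0)"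

lemma cont_coord2: "continuous_on UNIV (\<lambda>f::nat \<Rightarrow> nat \<Rightarrow> complex. f k l)"
proof -
  have "continuous_on UNIV ((\<lambda>g::nat \<Rightarrow> complex. g l) \<circ> (\<lambda>f::nat \<Rightarrow> nat \<Rightarrow> complex. f k))"
    by (rule continuous_on_compose) (auto intro: continuous_on_subset[OF continuous_on_product_coordinates])
  thus ?thesis by (simp add: comp_def)
qed

lemma Fm_cont: "continuous_on UNIV (Fm n b1 b2)"
  unfolding Fm_def
proof (intro continuous_on_coordinatewise_then_product)
  fix i j
  show "continuous_on UNIV (\<lambda>f::nat \<Rightarrow> nat \<Rightarrow> complex. if i < n \<and> j < n then (\<Sum>k<n. \<Sum>l<n. b1 $$ (i,k) * f k l * b2 $$ (l,j)) else 0)"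
  proof (cases "i < n \<and> j < n")
    case True
    have "continuous_on UNIV (\<lambda>f::nat \<Rightarrow> nat \<Rightarrow> complex. (\<Sum>k<n. \<Sum>l<n. b1 $$ (i,k) * f k l * b2 $$ (l,j)))"
      by (intro continuous_intros cont_coord2)
    thus ?thesis using True by simp
  next
    case False
    have e: "(\<lambda>f::nat \<Rightarrow> nat \<Rightarrow> complex. if i < n \<and> j < n then (\<Sum>k<n. \<Sum>l<n. b1 $$ (i,k) * f k l * b2 $$ (l,j)) else 0) = (\<lambda>f. 0)"
      using False by (intro ext) auto
    show ?thesis unfolding e by (rule continuous_on_const)
  qed
qed

lemma mat_fun_Fm:
  assumes "b1 \<in> carrier_mat n n" "X \<in> carrier_mat n n" "b2 \<in> carrier_mat n n"
  shows "mat_fun (b1 * X * b2) = Fm n b1 b2 (mat_fun X)"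
proof (intro ext)
  fix i j
  show "mat_fun (b1 * X * b2) i j = Fm n b1 b2 (mat_fun X) i j"
  proof (cases "i < n \<and> j < n")
    case True
    have "(b1 * X * b2) $$ (i,j) = (\<Sum>l<n. (b1 * X) $$ (i,l) * b2 $$ (l,j))"
      using assms True by (intro mult_entry) auto
    also have "\<dots> = (\<Sum>l<n. (\<Sum>k<n. b1 $$ (i,k) * X $$ (k,l)) * b2 $$ (l,j))"
    proof (intro sum.cong refl)
      fix l assume "l \<in> {..<n}"
      hence "(b1 * X) $$ (i,l) = (\<Sum>k<n. b1 $$ (i,k) * X $$ (k,l))"
        using assms True by (intro mult_entry) auto
      thus "(b1 * X) $$ (i,l) * b2 $$ (l,j) = (\<Sum>k<n. b1 $$ (i,k) * X $$ (k,l)) * b2 $$ (l,j)" by simp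
    qed
    also have "\<dots> = (\<Sum>l<n. \<Sum>k<n. b1 $$ (i,k) * X $$ (k,l) * b2 $$ (l,j))"
      by (simp add: sum_distrib_right)
    also have "\<dots> = (\<Sum>k<n. \<Sum>l<n. b1 $$ (i,k) * X $$ (k,l) * b2 $$ (l,j))"
      by (rule sum.swap)
    also have "\<dots> = (\<Sum>k<n. \<Sum>l<n. b1 $$ (i,k) * mat_fun X k l * b2 $$ (l,j))"
      using assms unfolding mat_fun_def by (intro sum.cong refl) auto
    finally show ?thesis using True assms unfolding Fm_def mat_fun_def by simp
  next
    case False
    thus ?thesis using assms unfolding Fm_def mat_fun_def by auto
  qed
qed

lemma clos_mult:
  assumes X: "X \<in> clos n S" and b: "b1 \<in> carrier_mat n n" "b2 \<in> carrier_mat n n"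
    and S: "\<And>Y. Y \<in> S \<Longrightarrow> Y \<in> carrier_mat n n \<and> b1 * Y * b2 \<in> S"
  shows "b1 * X * b2 \<in> clos n S"
proof -
  have Xc: "X \<in> carrier_mat n n" and Xf: "mat_fun X \<in> closure (mat_fun ` S)" using X unfolding clos_def by auto
  have "Fm n b1 b2 ` (mat_fun ` S) \<subseteq> closure (mat_fun ` S)"
  proof
    fix z assume "z \<in> Fm n b1 b2 ` (mat_fun ` S)"
    then obtain Y where Y: "Y \<in> S" "z = Fm n b1 b2 (mat_fun Y)" by auto
    have "z = mat_fun (b1 * Y * b2)" using Y S[OF Y(1)] mat_fun_Fm[OF b(1) _ b(2)] by simp
    moreover have "b1 * Y * b2 \<in> S" using S[OF Y(1)] by simp
    ultimately have "z \<in> mat_fun ` S" by simp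
    thus "z \<in> closure (mat_fun ` S)" using closure_subset[of "mat_fun ` S"] by (rule subsetD[rotated])
  qed
  hence "Fm n b1 b2 ` closure (mat_fun ` S) \<subseteq> closure (mat_fun ` S)"
    by (intro image_closure_subset continuous_on_subset[OF Fm_cont]) auto
  hence "Fm n b1 b2 (mat_fun X) \<in> closure (mat_fun ` S)" using Xf by blast
  thus ?thesis using mat_fun_Fm[OF b(1) Xc b(2)] Xc b unfolding clos_def by simp
qed

lemma clos_trans:
  assumes "S \<subseteq> clos n T"
  shows "clos n S \<subseteq> clos n T"
proof -
  have "mat_fun ` S \<subseteq> closure (mat_fun ` T)" using assms unfolding clos_def by auto
  hence "closure (mat_fun ` S) \<subseteq> closure (mat_fun ` T)"
    by (intro closure_minimal) auto
  thus ?thesis unfolding clos_def by auto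
qed

lemma sub_clos:
  assumes "S \<subseteq> carrier_mat n n"
  shows "S \<subseteq> clos n S"
proof
  fix x assume x: "x \<in> S"
  have "mat_fun x \<in> mat_fun ` S" using x by simp
  hence "mat_fun x \<in> closure (mat_fun ` S)" using closure_subset[of "mat_fun ` S"] by (rule subsetD[rotated])
  thus "x \<in> clos n S" using x assms unfolding clos_def by auto
qed

definition grp :: "nat \<Rightarrow> complex mat set \<Rightarrow> bool" where
  "grp n G1 \<longleftrightarrow> G1 \<subseteq> carrier_mat n n \<and> (\<forall>A\<in>G1. \<forall>B\<in>G1. A * B \<in> G1) \<and> 1\<^sub>m n \<in> G1"

lemma Borel_carrier: "b \<in> Borel n \<Longrightarrow> b \<in> carrier_mat n n"
  unfolding Borel_def GL_def by auto

lemma Borel_minus_carrier: "b \<in> Borel_minus n \<Longrightarrow> b \<in> carrier_mat n n"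
  unfolding Borel_minus_def GL_def by auto

lemma grp_Borel: "grp n (Borel n)"
  unfolding grp_def using Borel_mult one_Borel Borel_carrier by blast

lemma grp_Borel_minus: "grp n (Borel_minus n)"
  unfolding grp_def using Borel_minus_mult one_Borel_minus Borel_minus_carrier by blast

lemma cellG_carrier: "grp n G1 \<Longrightarrow> cellG G1 n w \<subseteq> carrier_mat n n"
  unfolding cellG_def grp_def using Borel_carrier by fastforce

lemma assoc5:
  assumes A: "A \<in> carrier_mat n n" and B: "B \<in> carrier_mat n n" and C: "C \<in> carrier_mat n n"
    and D: "D \<in> carrier_mat n n" and E: "E \<in> carrier_mat n n"
  shows "A * (B * C * D) * E = (A * B) * C * (D * E)"
proof -
  have BC: "B * C \<in> carrier_mat n n" using B C by simp
  have ABC: "A * B * C \<in> carrier_mat n n" using A B C by simp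
  have "A * (B * C * D) = A * (B * C) * D" using assoc_mult_mat[OF A BC D] by simp
  also have "A * (B * C) = A * B * C" using assoc_mult_mat[OF A B C] by simp
  finally have 1: "A * (B * C * D) = A * B * C * D" .
  have "A * (B * C * D) * E = A * B * C * D * E" using 1 by simp
  also have "\<dots> = A * B * C * (D * E)" using assoc_mult_mat[OF ABC D E] .
  finally show ?thesis .
qed

lemma cellG_inv:
  assumes G: "grp n G1" and Y: "Y \<in> cellG G1 n w" and b: "b1 \<in> G1" "b2 \<in> Borel n"
  shows "b1 * Y * b2 \<in> cellG G1 n w"
proof -
  obtain c1 c2 where c: "c1 \<in> G1" "c2 \<in> Borel n" "Y = c1 * perm_mat n w * c2"
    using Y unfolding cellG_def by auto
  have car: "b1 \<in> carrier_mat n n" "c1 \<in> carrier_mat n n" "c2 \<in> carrier_mat n n" "b2 \<in> carrier_mat n n"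
    using G b c Borel_carrier unfolding grp_def by auto
  have P: "perm_mat n w \<in> carrier_mat n n" by simp
  have "b1 * Y * b2 = (b1 * c1) * perm_mat n w * (c2 * b2)"
    unfolding c(3) using assoc5[OF car(1,2) P car(3,4)] .
  moreover have "b1 * c1 \<in> G1" using G b c unfolding grp_def by auto
  moreover have "c2 * b2 \<in> Borel n" using Borel_mult b c by auto
  ultimately show ?thesis unfolding cellG_def by blast
qed

lemma cell_clos:
  assumes G: "grp n G1" and P: "perm_mat n u \<in> clos n (cellG G1 n v)"
  shows "cellG G1 n u \<subseteq> clos n (cellG G1 n v)"
proof
  fix Y assume "Y \<in> cellG G1 n u"
  then obtain b1 b2 where b: "b1 \<in> G1" "b2 \<in> Borel n" "Y = b1 * perm_mat n u * b2"
    unfolding cellG_def by auto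
  have c: "b1 \<in> carrier_mat n n" "b2 \<in> carrier_mat n n" using G b Borel_carrier unfolding grp_def by auto
  show "Y \<in> clos n (cellG G1 n v)" unfolding b(3)
    by (rule clos_mult[OF P c]) (use cellG_carrier[OF G] cellG_inv[OF G _ b(1,2)] in auto)
qed

lemma perm_in_cell: "grp n G1 \<Longrightarrow> perm_mat n u \<in> cellG G1 n u"
  unfolding cellG_def grp_def using one_Borel
  by (auto intro!: exI[of _ "1\<^sub>m n"] simp: left_mult_one_mat right_mult_one_mat)

lemma perm_in_clos: "grp n G1 \<Longrightarrow> perm_mat n u \<in> clos n (cellG G1 n u)"
  using perm_in_cell sub_clos cellG_carrier by blast


definition el :: "nat \<Rightarrow> nat \<Rightarrow> nat \<Rightarrow> complex \<Rightarrow> complex mat" where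
  "el n x y c = mat n n (\<lambda>(i,j). (if i = j then 1 else 0) + (if i = x \<and> j = y then c else 0))"

definition bm :: "nat \<Rightarrow> nat \<Rightarrow> complex \<Rightarrow> complex mat" where
  "bm n k c = mat n n (\<lambda>(a,j). if a = k-1 \<and> j = k-1 then 1/c else if a = k-1 \<and> j = k then 1
      else if a = k \<and> j = k then -c else if a = j then 1 else 0)"

lemma upper_GL:
  fixes A :: "complex mat"
  assumes A: "A \<in> carrier_mat n n" and up: "\<And>i j. j < i \<Longrightarrow> i < n \<Longrightarrow> A $$ (i,j) = 0"
    and d: "\<And>i. i < n \<Longrightarrow> A $$ (i,i) \<noteq> 0"
  shows "A \<in> GL n"
proof -
  have "upper_triangular A" using A up unfolding upper_triangular_def by auto
  hence "det A = prod_list (diag_mat A)" using det_upper_triangular A by blast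
  also have "\<dots> = (\<Prod>i = 0..<n. A $$ (i,i))" using A by (simp add: prod_list_diag_prod)
  also have "\<dots> \<noteq> 0" using d by (simp add: prod_zero_iff)
  finally show ?thesis using A GL_det[OF A] unfolding GL_def by auto
qed

lemma lower_GL:
  fixes A :: "complex mat"
  assumes A: "A \<in> carrier_mat n n" and lo: "\<And>i j. i < j \<Longrightarrow> j < n \<Longrightarrow> A $$ (i,j) = 0"
    and d: "\<And>i. i < n \<Longrightarrow> A $$ (i,i) \<noteq> 0"
  shows "A \<in> GL n"
proof -
  have "det A = prod_list (diag_mat A)" using det_lower_triangular[of n A] A lo by blast
  also have "\<dots> = (\<Prod>i = 0..<n. A $$ (i,i))" using A by (simp add: prod_list_diag_prod)
  also have "\<dots> \<noteq> 0" using d by (simp add: prod_zero_iff)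
  finally show ?thesis using A GL_det[OF A] unfolding GL_def by auto
qed

lemma el_Borel: "x < y \<Longrightarrow> y < n \<Longrightarrow> el n x y c \<in> Borel n"
proof -
  assume xy: "x < y" "y < n"
  have "el n x y c \<in> GL n" by (rule upper_GL) (use xy in \<open>auto simp: el_def\<close>)
  thus ?thesis unfolding Borel_def using xy by (auto simp: el_def)
qed

lemma el_Borel_minus: "y < x \<Longrightarrow> x < n \<Longrightarrow> el n x y c \<in> Borel_minus n"
proof -
  assume xy: "y < x" "x < n"
  have "el n x y c \<in> GL n" by (rule lower_GL) (use xy in \<open>auto simp: el_def\<close>)
  thus ?thesis unfolding Borel_minus_def using xy by (auto simp: el_def)
qed

lemma bm_Borel: "0 < k \<Longrightarrow> k < n \<Longrightarrow> c \<noteq> 0 \<Longrightarrow> bm n k c \<in> Borel n"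
proof -
  assume k: "0 < k" "k < n" and c: "c \<noteq> 0"
  have "bm n k c \<in> GL n" by (rule upper_GL) (use k c in \<open>auto simp: bm_def\<close>)
  thus ?thesis unfolding Borel_def using k by (auto simp: bm_def)
qed

lemma el_left:
  assumes A: "A \<in> carrier_mat n n" and ij: "i < n" "j < n" and xy: "x < n" "y < n"
  shows "(el n x y c * A) $$ (i,j) = A $$ (i,j) + (if i = x then c * A $$ (y,j) else 0)"
proof -
  have "(el n x y c * A) $$ (i,j) = (\<Sum>l<n. el n x y c $$ (i,l) * A $$ (l,j))"
    using A ij by (intro mult_entry) (auto simp: el_def)
  also have "\<dots> = (\<Sum>l<n. (if l = i then A $$ (i,j) else 0) + (if l = y then (if i = x then c * A $$ (y,j) else 0) else 0))"
    using ij by (intro sum.cong refl) (auto simp: el_def distrib_right)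
  also have "\<dots> = A $$ (i,j) + (if i = x then c * A $$ (y,j) else 0)"
    using ij xy by (simp add: sum.distrib)
  finally show ?thesis .
qed

lemma step_entry:
  assumes u: "pn n u" and k: "0 < k" "k < n" and c: "c \<noteq> 0" and ij: "i < n" "j < n"
  shows "(el n (u k) (u (k-1)) c * perm_mat n u * bm n k c) $$ (i,j) =
    (if i = u (simple_refl k j) then 1 else 0) + (if i = u (k-1) \<and> j = k-1 then 1/c else 0)"
proof -
  define a where "a = iv u i"
  have a: "a < n" "u a = i" unfolding a_def using pn_inv_lt[OF u ij(1)] permutes_inverses[OF u] by auto
  have inj: "\<And>p q. u p = u q \<longleftrightarrow> p = q" using permutes_inj[OF u] unfolding inj_def by auto
  have Bc: "bm n k c \<in> carrier_mat n n" unfolding bm_def by simp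
  have Pc: "perm_mat n u \<in> carrier_mat n n" by simp
  have ukn: "u k < n" "u (k-1) < n" using pn_lt[OF u] k by auto
  have e0: "el n (u k) (u (k-1)) c * perm_mat n u * bm n k c = el n (u k) (u (k-1)) c * (perm_mat n u * bm n k c)"
    by (rule assoc_mult_mat[of _ n n _ n _ n]) (auto simp: el_def bm_def)
  have PB: "\<And>p q. p < n \<Longrightarrow> q < n \<Longrightarrow> (perm_mat n u * bm n k c) $$ (p,q) = bm n k c $$ (iv u p, q)"
    using perm_mult_left[OF u Bc] by blast
  have "(el n (u k) (u (k-1)) c * perm_mat n u * bm n k c) $$ (i,j) =
      (perm_mat n u * bm n k c) $$ (i,j) + (if i = u k then c * (perm_mat n u * bm n k c) $$ (u (k-1),j) else 0)"
    unfolding e0 by (rule el_left) (use ij ukn Bc in auto)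
  also have "\<dots> = bm n k c $$ (a, j) + (if a = k then c * bm n k c $$ (k-1, j) else 0)"
    using PB ij ukn a inj permutes_inverses[OF u] unfolding a_def by auto
  also have "\<dots> = (if a = simple_refl k j then 1 else 0) + (if a = k-1 \<and> j = k-1 then 1/c else 0)"
    using a ij k c by (auto simp: bm_def sr_apply)
  also have "\<dots> = (if i = u (simple_refl k j) then 1 else 0) + (if i = u (k-1) \<and> j = k-1 then 1/c else 0)"
    using a(2) inj by auto
  finally show ?thesis .
qed

definition Phi :: "nat \<Rightarrow> (nat \<Rightarrow> nat) \<Rightarrow> nat \<Rightarrow> complex \<Rightarrow> nat \<Rightarrow> nat \<Rightarrow> complex" where
  "Phi n u k e = (\<lambda>i j. if i < n \<and> j < n then (if i = u (simple_refl k j) then 1 else 0) +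
      (if i = u (k-1) \<and> j = k-1 then e else 0) else 0)"

lemma Phi_cont: "continuous_on UNIV (Phi n u k)"
  unfolding Phi_def
proof (intro continuous_on_coordinatewise_then_product)
  fix i j
  show "continuous_on UNIV (\<lambda>e::complex. if i < n \<and> j < n then (if i = u (simple_refl k j) then 1 else 0) +
      (if i = u (k-1) \<and> j = k-1 then e else 0) else 0)"
    by (cases "i < n \<and> j < n"; cases "i = u (k-1) \<and> j = k-1") (auto intro!: continuous_intros)
qed

lemma step_closure:
  assumes G: "grp n G1" and u: "pn n u" and k: "0 < k" "k < n"
    and el: "\<And>c. c \<noteq> 0 \<Longrightarrow> el n (u k) (u (k-1)) c \<in> G1"
  shows "perm_mat n (u \<circ> simple_refl k) \<in> clos n (cellG G1 n u)"
proof -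
  let ?T = "mat_fun ` cellG G1 n u"
  have P0: "Phi n u k 0 = mat_fun (perm_mat n (u \<circ> simple_refl k))"
    unfolding Phi_def mat_fun_def by (intro ext) auto
  have mem: "Phi n u k (1/c) \<in> ?T" if c: "c \<noteq> 0" for c
  proof -
    let ?X = "el n (u k) (u (k-1)) c * perm_mat n u * bm n k c"
    have "?X \<in> cellG G1 n u" unfolding cellG_def using el[OF c] bm_Borel[OF k c] by blast
    moreover have "mat_fun ?X = Phi n u k (1/c)"
    proof (intro ext)
      fix i j
      show "mat_fun ?X i j = Phi n u k (1/c) i j"
        using step_entry[OF u k c] unfolding mat_fun_def Phi_def by (auto simp: el_def bm_def)
    qed
    ultimately show ?thesis by (metis imageI)
  qed
  have lim: "((\<lambda>m. Phi n u k (inverse (of_nat m))) \<longlongrightarrow> Phi n u k 0) sequentially"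
    by (rule continuous_on_tendsto_compose[OF Phi_cont lim_inverse_n]) auto
  have ev: "eventually (\<lambda>m. Phi n u k (inverse (of_nat m)) \<in> closure ?T) sequentially"
  proof (rule eventually_sequentiallyI[of 1])
    fix m :: nat assume "1 \<le> m"
    hence "(of_nat m :: complex) \<noteq> 0" by simp
    hence "Phi n u k (1 / of_nat m) \<in> ?T" by (rule mem)
    hence "Phi n u k (inverse (of_nat m)) \<in> ?T" by (simp add: inverse_eq_divide)
    thus "Phi n u k (inverse (of_nat m)) \<in> closure ?T" using closure_subset[of ?T] by (rule subsetD[rotated])
  qed
  have "Phi n u k 0 \<in> closure ?T"
    by (rule Lim_in_closed_set[OF closed_closure ev _ lim]) simp
  thus ?thesis unfolding clos_def P0 by simp
qed


lemma mult_carrier_nn: "A \<in> carrier_mat n n \<Longrightarrow> B \<in> carrier_mat n n \<Longrightarrow> A * B \<in> carrier_mat n n"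
  by simp

lemma triple_entry:
  fixes b1 X b2 :: "complex mat"
  assumes "b1 \<in> carrier_mat n n" "X \<in> carrier_mat n n" "b2 \<in> carrier_mat n n" "i < n" "j < n"
  shows "(b1 * X * b2) $$ (i,j) = (\<Sum>k<n. \<Sum>l<n. b1 $$ (i,k) * X $$ (k,l) * b2 $$ (l,j))"
proof -
  have "(b1 * X * b2) $$ (i,j) = mat_fun (b1 * X * b2) i j" using assms unfolding mat_fun_def by simp
  also have "\<dots> = Fm n b1 b2 (mat_fun X) i j" using mat_fun_Fm[OF assms(1-3)] by simp
  also have "\<dots> = (\<Sum>k<n. \<Sum>l<n. b1 $$ (i,k) * X $$ (k,l) * b2 $$ (l,j))"
    using assms unfolding Fm_def mat_fun_def by (auto intro!: sum.cong)
  finally show ?thesis .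
qed

lemma Hess_conj:
  assumes U: "U \<in> Borel n" and Ui: "Ui \<in> Borel n" and M: "M \<in> Hess n J"
  shows "U * M * Ui \<in> Hess n J"
proof -
  have c: "U \<in> carrier_mat n n" "Ui \<in> carrier_mat n n" "M \<in> carrier_mat n n"
    using U Ui M Borel_carrier unfolding Hess_def by auto
  have "(U * M * Ui) $$ (r,cc) = 0 \<or> (r = cc + 1 \<and> r \<in> J)" if rc: "r < n" "cc < r" for r cc
  proof (cases "r = cc + 1 \<and> r \<in> J")
    case True thus ?thesis by blast
  next
    case False
    have "(U * M * Ui) $$ (r,cc) = (\<Sum>k<n. \<Sum>l<n. U $$ (r,k) * M $$ (k,l) * Ui $$ (l,cc))"
      using triple_entry[OF c(1,3,2)] rc by simp
    also have "\<dots> = 0"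
    proof (intro sum.neutral ballI)
      fix k l assume k: "k \<in> {..<n}" and l: "l \<in> {..<n}"
      show "U $$ (r,k) * M $$ (k,l) * Ui $$ (l,cc) = 0"
      proof (cases "r \<le> k \<and> l \<le> cc")
        case True
        hence "l < k" using rc by simp
        hence "M $$ (k,l) = 0 \<or> (k = l + 1 \<and> k \<in> J)" using M k unfolding Hess_def by auto
        moreover have "\<not> (k = l + 1 \<and> k \<in> J)"
        proof
          assume a: "k = l + 1 \<and> k \<in> J"
          hence "k = r" "r = cc + 1" using True rc by linarith+
          thus False using False a by auto
        qed
        ultimately have "M $$ (k,l) = 0" by blast
        thus ?thesis by simp
      next
        case False
        hence "U $$ (r,k) = 0 \<or> Ui $$ (l,cc) = 0" using U Ui k l rc unfolding Borel_def
          by (auto simp: not_le)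
        thus ?thesis by auto
      qed
    qed
    finally show ?thesis by simp
  qed
  moreover have "U * M * Ui \<in> carrier_mat n n" using c by simp
  ultimately show ?thesis unfolding Hess_def by auto
qed

lemma N_carrier[simp]: "Njor n \<in> carrier_mat n n"
  unfolding Njor_def by simp

lemma NL_entry:
  assumes L: "L \<in> carrier_mat n n" and kj: "k < n" "j < n"
  shows "(Njor n * L) $$ (k,j) = (if Suc k < n then L $$ (Suc k, j) else 0)"
proof -
  have "(Njor n * L) $$ (k,j) = (\<Sum>l<n. Njor n $$ (k,l) * L $$ (l,j))"
    using L kj by (intro mult_entry) auto
  also have "\<dots> = (\<Sum>l<n. if l = Suc k then L $$ (Suc k, j) else 0)"
    by (intro sum.cong refl) (auto simp: Njor_def kj)
  also have "\<dots> = (if Suc k < n then L $$ (Suc k, j) else 0)" by simp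
  finally show ?thesis .
qed

lemma Borel_diag: "L \<in> Borel n \<Longrightarrow> i < n \<Longrightarrow> L $$ (i,i) \<noteq> 0"
proof -
  assume L: "L \<in> Borel n" and i: "i < n"
  have c: "L \<in> carrier_mat n n" using L Borel_carrier by auto
  have "upper_triangular L" using L c unfolding upper_triangular_def Borel_def by auto
  hence "det L = prod_list (diag_mat L)" using det_upper_triangular c by blast
  also have "\<dots> = (\<Prod>i = 0..<n. L $$ (i,i))" using c by (simp add: prod_list_diag_prod)
  finally have e: "det L = (\<Prod>i = 0..<n. L $$ (i,i))" .
  have "L \<in> GL n" using L unfolding Borel_def by blast
  hence "det L \<noteq> 0" by (rule GL_detD)
  hence "(\<Prod>i = 0..<n. L $$ (i,i)) \<noteq> 0" using e by simp
  thus ?thesis using i by (simp add: prod_zero_iff)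
qed

lemma Borel_minus_diag: "L \<in> Borel_minus n \<Longrightarrow> i < n \<Longrightarrow> L $$ (i,i) \<noteq> 0"
proof -
  assume L: "L \<in> Borel_minus n" and i: "i < n"
  have c: "L \<in> carrier_mat n n" using L Borel_minus_carrier by auto
  have "det L = prod_list (diag_mat L)" using det_lower_triangular[of n L] c L unfolding Borel_minus_def by blast
  also have "\<dots> = (\<Prod>i = 0..<n. L $$ (i,i))" using c by (simp add: prod_list_diag_prod)
  finally have e: "det L = (\<Prod>i = 0..<n. L $$ (i,i))" .
  have "L \<in> GL n" using L unfolding Borel_minus_def by blast
  hence "det L \<noteq> 0" by (rule GL_detD)
  hence "(\<Prod>i = 0..<n. L $$ (i,i)) \<noteq> 0" using e by simp
  thus ?thesis using i by (simp add: prod_zero_iff)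
qed

lemma pet_perm_gen:
  assumes g: "g \<in> GL n" and dec: "g = L * perm_mat n u * U" and u: "pn n u"
    and LG: "L \<in> GL n" and UB: "U \<in> Borel n"
    and h1: "\<And>i k. i < n \<Longrightarrow> k < n \<Longrightarrow> k \<noteq> i \<Longrightarrow> minv n L $$ (i,k) * L $$ (k,i) = 0"
    and h2: "\<And>i k. Suc i < n \<Longrightarrow> Suc k < n \<Longrightarrow> k \<noteq> i \<Longrightarrow> minv n L $$ (i,k) * L $$ (Suc k, Suc i) = 0"
    and h3: "\<And>i. i < n \<Longrightarrow> L $$ (i,i) \<noteq> 0"
    and M: "minv n g * Njor n * g \<in> Hess n J"
  shows "petp n J u"
proof -
  define Li where "Li = minv n L"
  define gi where "gi = minv n g"
  define Ui where "Ui = minv n U"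
  define P where "P = perm_mat n u"
  define N where "N = Njor n"
  have UG: "U \<in> GL n" using UB unfolding Borel_def by auto
  note mL = minv_props[OF LG, folded Li_def]
  note mg = minv_props[OF g, folded gi_def]
  note mU = minv_props[OF UG, folded Ui_def]
  have Lc: "L \<in> carrier_mat n n" and Uc: "U \<in> carrier_mat n n" and gc: "g \<in> carrier_mat n n"
    using LG UG g GL_carrier by auto
  have Pc: "P \<in> carrier_mat n n" and Nc: "N \<in> carrier_mat n n" unfolding P_def N_def by auto
  note cs = Lc Uc gc Pc Nc mL(1) mg(1) mU(1)
  define Y where "Y = Li * N * L"
  define Z where "Z = U * (gi * N * g) * Ui"
  have Zh: "Z \<in> Hess n J" unfolding Z_def gi_def N_def
    by (rule Hess_conj[OF UB _ M]) (use Borel_inv[OF UB] Ui_def in simp)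
  have gi_eq: "P * (U * gi) = Li"
  proof -
    have "L * (P * (U * gi)) = g * gi" unfolding dec P_def using cs
      by (simp add: assoc_mult_mat[of _ n n _ n _ n] mult_carrier_nn P_def)
    also have "\<dots> = 1\<^sub>m n" using mg by simp
    finally have e: "L * (P * (U * gi)) = 1\<^sub>m n" .
    have "Li = Li * (L * (P * (U * gi)))" using e mL right_mult_one_mat[of Li n n] by simp
    also have "\<dots> = (Li * L) * (P * (U * gi))" using cs by (simp add: assoc_mult_mat[of _ n n _ n _ n] mult_carrier_nn)
    also have "\<dots> = P * (U * gi)" using mL cs left_mult_one_mat[of "P * (U * gi)" n n] by simp
    finally show ?thesis by simp
  qed
  have gi_eq2: "P * (U * (gi * X)) = Li * X" if X: "X \<in> carrier_mat n n" for X
  proof -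
    have "P * (U * (gi * X)) = (P * (U * gi)) * X" using cs X by (simp add: assoc_mult_mat[of _ n n _ n _ n] mult_carrier_nn)
    thus ?thesis using gi_eq by simp
  qed
  have YP: "Y * P = P * Z"
  proof -
    have UUi: "U * Ui = 1\<^sub>m n" using mU by simp
    have "P * Z = P * (U * (gi * (N * (L * (P * (U * Ui))))))"
      unfolding Z_def dec using cs by (simp add: assoc_mult_mat[of _ n n _ n _ n] mult_carrier_nn P_def)
    also have "\<dots> = P * (U * (gi * (N * (L * P))))" using UUi Pc right_mult_one_mat[OF Pc] by simp
    also have "\<dots> = Li * (N * (L * P))" using gi_eq2 cs by simp
    also have "\<dots> = Y * P" unfolding Y_def using cs by (simp add: assoc_mult_mat[of _ n n _ n _ n] mult_carrier_nn)
    finally show ?thesis by simp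
  qed
  have Ydiag: "Y $$ (i, Suc i) \<noteq> 0" if i: "Suc i < n" for i
  proof -
    have Ye: "Y = Li * (N * L)" unfolding Y_def using assoc_mult_mat[OF mL(1) Nc Lc] .
    have NLc: "N * L \<in> carrier_mat n n" using Nc Lc by simp
    have "Y $$ (i, Suc i) = (\<Sum>k<n. Li $$ (i,k) * (N * L) $$ (k, Suc i))"
      unfolding Ye by (rule mult_entry[OF mL(1) NLc]) (use i in auto)
    also have "\<dots> = (\<Sum>k<n. Li $$ (i,k) * (if Suc k < n then L $$ (Suc k, Suc i) else 0))"
      unfolding N_def using NL_entry[OF Lc] i by (intro sum.cong refl) auto
    also have "\<dots> = Li $$ (i,i) * (if Suc i < n then L $$ (Suc i, Suc i) else 0)"
      by (rule sum_single) (use i h2 Li_def in auto)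
    also have "\<dots> = Li $$ (i,i) * L $$ (Suc i, Suc i)" using i by simp
    finally have e1: "Y $$ (i, Suc i) = Li $$ (i,i) * L $$ (Suc i, Suc i)" .
    have "1 = (Li * L) $$ (i,i)" using mL i by simp
    also have "\<dots> = (\<Sum>k<n. Li $$ (i,k) * L $$ (k,i))" using cs i by (intro mult_entry) auto
    also have "\<dots> = Li $$ (i,i) * L $$ (i,i)"
      by (rule sum_single) (use i h1 Li_def in auto)
    finally have "Li $$ (i,i) \<noteq> 0" by auto
    thus ?thesis using e1 h3[OF i] by simp
  qed
  show ?thesis unfolding petp_def
  proof (intro allI impI)
    fix a b assume ab: "a < n" "b < n" "u b = Suc (u a)" "b < a"
    have ua: "u a < n" using pn_lt[OF u ab(1)] .
    have "Suc (u a) < n" using ab pn_lt[OF u ab(2)] by simp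
    hence "Y $$ (u a, u b) \<noteq> 0" using Ydiag ab(3) by simp
    moreover have "(Y * P) $$ (u a, b) = Y $$ (u a, u b)"
      unfolding P_def by (rule perm_mult_right[OF u]) (use ua ab cs Y_def in auto)
    moreover have "(P * Z) $$ (u a, b) = Z $$ (iv u (u a), b)"
      unfolding P_def by (rule perm_mult_left[OF u]) (use ua ab Zh Hess_def in auto)
    moreover have "iv u (u a) = a" using permutes_inverses[OF u] by simp
    ultimately have "Z $$ (a, b) \<noteq> 0" using YP by simp
    thus "a = Suc b \<and> a \<in> J" using Zh ab unfolding Hess_def by auto
  qed
qed

lemma pet_perm_plus:
  assumes g: "g \<in> GL n" and dec: "g = L * perm_mat n u * U" and u: "pn n u"
    and LB: "L \<in> Borel n" and UB: "U \<in> Borel n"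
    and M: "minv n g * Njor n * g \<in> Hess n J"
  shows "petp n J u"
proof -
  have Li: "minv n L \<in> Borel n" using Borel_inv[OF LB] .
  show ?thesis
  proof (rule pet_perm_gen[OF g dec u _ UB _ _ _ M])
    show "L \<in> GL n" using LB unfolding Borel_def by auto
    show "minv n L $$ (i,k) * L $$ (k,i) = 0" if "i < n" "k < n" "k \<noteq> i" for i k
      using that Li LB unfolding Borel_def by (cases "i < k") auto
    show "minv n L $$ (i,k) * L $$ (Suc k, Suc i) = 0" if "Suc i < n" "Suc k < n" "k \<noteq> i" for i k
      using that Li LB unfolding Borel_def by (cases "i < k") auto
    show "L $$ (i,i) \<noteq> 0" if "i < n" for i using Borel_diag[OF LB that] .
  qed
qed

lemma pet_perm_minus:
  assumes g: "g \<in> GL n" and dec: "g = L * perm_mat n u * U" and u: "pn n u"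
    and LB: "L \<in> Borel_minus n" and UB: "U \<in> Borel n"
    and M: "minv n g * Njor n * g \<in> Hess n J"
  shows "petp n J u"
proof -
  have Li: "minv n L \<in> Borel_minus n" using Borel_minus_inv[OF LB] .
  show ?thesis
  proof (rule pet_perm_gen[OF g dec u _ UB _ _ _ M])
    show "L \<in> GL n" using LB unfolding Borel_minus_def by auto
    show "minv n L $$ (i,k) * L $$ (k,i) = 0" if "i < n" "k < n" "k \<noteq> i" for i k
      using that Li LB unfolding Borel_minus_def by (cases "i < k") auto
    show "minv n L $$ (i,k) * L $$ (Suc k, Suc i) = 0" if "Suc i < n" "Suc k < n" "k \<noteq> i" for i k
      using that Li LB unfolding Borel_minus_def by (cases "i < k") auto
    show "L $$ (i,i) \<noteq> 0" if "i < n" for i using Borel_minus_diag[OF LB that] .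
  qed
qed


lemma SJ_step:
  assumes v: "v \<in> SJ n J" and k: "k \<in> J" "0 < k" "k < n"
  shows "v \<circ> simple_refl k \<in> SJ n J"
proof -
  have pv: "pn n v" using v unfolding SJ_def by auto
  have "pn n (v \<circ> simple_refl k)" using permutes_compose[OF sr_perm[OF k(2,3)] pv] .
  moreover have "cutp m (v \<circ> simple_refl k)" if m: "m \<in> {1..<n} - J" for m
  proof -
    have "k \<noteq> m" using m k by auto
    hence a: "cutp m (simple_refl k)" by (rule sr_cut[OF k(2)])
    have b: "cutp m v" using v m unfolding SJ_def by auto
    show ?thesis by (rule cutp_comp[OF b a])
  qed
  ultimately show ?thesis unfolding SJ_def by auto
qed

lemma no_asc_desc:
  assumes v: "v \<in> SJ n J" and na: "\<not> (\<exists>k\<in>J. 0 < k \<and> k < n \<and> v (k-1) < v k)"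
  shows "desc_on n J v"
  unfolding desc_on_def
proof
  fix k assume "k \<in> J \<inter> {1..<n}"
  hence k: "k \<in> J" "0 < k" "k < n" by auto
  have pv: "pn n v" using v unfolding SJ_def by auto
  have "v k \<noteq> v (k-1)" using permutes_inj[OF pv] k unfolding inj_def by force
  thus "v k < v (k-1)" using na k by auto
qed

lemma bubble_B:
  assumes w: "w \<in> SJ n J" "desc_on n J w"
  shows "v \<in> SJ n J \<Longrightarrow> perm_mat n v \<in> clos n (cellG (Borel n) n w)"
proof (induction "ascs n v" arbitrary: v rule: less_induct)
  case less
  show ?case
  proof (cases "\<exists>k\<in>J. 0 < k \<and> k < n \<and> v (k-1) < v k")
    case True
    then obtain k where k: "k \<in> J" "0 < k" "k < n" "v (k-1) < v k" by auto
    define u where "u = v \<circ> simple_refl k"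
    have uS: "u \<in> SJ n J" unfolding u_def by (rule SJ_step[OF less.prems k(1-3)])
    have pv: "pn n v" using less.prems unfolding SJ_def by auto
    have pu: "pn n u" using uS unfolding SJ_def by auto
    have "ascs n u < ascs n v" unfolding u_def by (rule ascs_dec[OF k(2,3,4)])
    hence IH: "perm_mat n u \<in> clos n (cellG (Borel n) n w)" using less.hyps uS by blast
    have uk: "u k = v (k-1)" "u (k-1) = v k" unfolding u_def using k by (auto simp: sr_apply)
    have ukn: "u (k-1) < n" using pn_lt[OF pu] k by simp
    have "perm_mat n (u \<circ> simple_refl k) \<in> clos n (cellG (Borel n) n u)"
      by (rule step_closure[OF grp_Borel pu k(2,3)]) (use uk k(4) ukn el_Borel in auto)
    moreover have "u \<circ> simple_refl k = v" unfolding u_def by (simp add: comp_assoc sr_comp_invol)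
    ultimately have "perm_mat n v \<in> clos n (cellG (Borel n) n u)" by simp
    moreover have "clos n (cellG (Borel n) n u) \<subseteq> clos n (cellG (Borel n) n w)"
      by (rule clos_trans[OF cell_clos[OF grp_Borel IH]])
    ultimately show ?thesis by blast
  next
    case False
    hence "desc_on n J v" by (rule no_asc_desc[OF less.prems])
    hence "v = w" using SJ_unique less.prems w by blast
    thus ?thesis using perm_in_clos[OF grp_Borel] by simp
  qed
qed

lemma bubble_Bm:
  assumes w: "w \<in> SJ n J" "desc_on n J w"
  shows "v \<in> SJ n J \<Longrightarrow> perm_mat n w \<in> clos n (cellG (Borel_minus n) n v)"
proof (induction "ascs n v" arbitrary: v rule: less_induct)
  case less
  show ?case
  proof (cases "\<exists>k\<in>J. 0 < k \<and> k < n \<and> v (k-1) < v k")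
    case True
    then obtain k where k: "k \<in> J" "0 < k" "k < n" "v (k-1) < v k" by auto
    define u where "u = v \<circ> simple_refl k"
    have uS: "u \<in> SJ n J" unfolding u_def by (rule SJ_step[OF less.prems k(1-3)])
    have pv: "pn n v" using less.prems unfolding SJ_def by auto
    have "ascs n u < ascs n v" unfolding u_def by (rule ascs_dec[OF k(2,3,4)])
    hence IH: "perm_mat n w \<in> clos n (cellG (Borel_minus n) n u)" using less.hyps uS by blast
    have vkn: "v k < n" using pn_lt[OF pv] k by simp
    have "perm_mat n u \<in> clos n (cellG (Borel_minus n) n v)" unfolding u_def
      by (rule step_closure[OF grp_Borel_minus pv k(2,3)]) (use k(4) vkn el_Borel_minus in auto)
    hence "clos n (cellG (Borel_minus n) n u) \<subseteq> clos n (cellG (Borel_minus n) n v)"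
      by (rule clos_trans[OF cell_clos[OF grp_Borel_minus]])
    thus ?thesis using IH by blast
  next
    case False
    hence "desc_on n J v" by (rule no_asc_desc[OF less.prems])
    hence "v = w" using SJ_unique less.prems w by blast
    thus ?thesis using perm_in_clos[OF grp_Borel_minus] by simp
  qed
qed

definition subm :: "nat \<Rightarrow> complex mat \<Rightarrow> complex mat" where
  "subm i A = mat i i (\<lambda>(r,c). A $$ (r,c))"

lemma lead_minor_subm: "lead_minor i A = det (subm i A)"
  unfolding lead_minor_def subm_def by simp

lemma subm_mult:
  assumes A: "A \<in> carrier_mat n n" and B: "B \<in> carrier_mat n n" and i: "i \<le> n"
    and c: "cutzl n i A \<or> cutz n i B"
  shows "subm i (A * B) = subm i A * subm i B"
proof (rule eq_matI)
  fix r cc assume "r < dim_row (subm i A * subm i B)" "cc < dim_col (subm i A * subm i B)"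
  hence rc: "r < i" "cc < i" unfolding subm_def by auto
  have "(A * B) $$ (r,cc) = (\<Sum>l<n. A $$ (r,l) * B $$ (l,cc))"
    using A B rc i by (intro mult_entry) auto
  also have "\<dots> = (\<Sum>l<i. A $$ (r,l) * B $$ (l,cc))"
  proof (rule sum.mono_neutral_right)
    show "\<forall>l\<in>{..<n} - {..<i}. A $$ (r,l) * B $$ (l,cc) = 0"
      using c rc unfolding cutzl_def cutz_def by auto
  qed (use i in auto)
  also have "\<dots> = (subm i A * subm i B) $$ (r,cc)"
    using rc by (subst mult_entry[of _ i]) (auto simp: subm_def)
  finally show "subm i (A * B) $$ (r,cc) = (subm i A * subm i B) $$ (r,cc)"
    using rc by (simp add: subm_def)
qed (auto simp: subm_def)

lemma lead_minor_dec:
  assumes L: "L \<in> Borel_minus n" and U: "U \<in> Borel n" and i: "i \<le> n"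
  shows "lead_minor i (L * perm_mat n u * U) = det (subm i L) * det (subm i (perm_mat n u)) * det (subm i U)"
proof -
  have Lc: "L \<in> carrier_mat n n" and Uc: "U \<in> carrier_mat n n" using L U Borel_carrier Borel_minus_carrier by auto
  have Pc: "perm_mat n u \<in> carrier_mat n n" by simp
  have cU: "cutz n i U" using U unfolding Borel_iff by auto
  have cL: "cutzl n i L" using L unfolding Borel_minus_iff by auto
  have "subm i (L * perm_mat n u * U) = subm i (L * perm_mat n u) * subm i U"
    by (rule subm_mult) (use Lc Pc Uc i cU in auto)
  also have "subm i (L * perm_mat n u) = subm i L * subm i (perm_mat n u)"
    by (rule subm_mult) (use Lc Pc i cL in auto)
  finally have e: "subm i (L * perm_mat n u * U) = subm i L * subm i (perm_mat n u) * subm i U" .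
  have c: "subm i L \<in> carrier_mat i i" "subm i (perm_mat n u) \<in> carrier_mat i i" "subm i U \<in> carrier_mat i i"
    unfolding subm_def by auto
  show ?thesis unfolding lead_minor_subm e using det_mult c by (metis mult_carrier_mat)
qed

lemma det_subm_L: "L \<in> Borel_minus n \<Longrightarrow> i \<le> n \<Longrightarrow> det (subm i L) \<noteq> 0"
proof -
  assume L: "L \<in> Borel_minus n" and i: "i \<le> n"
  have "subm i L \<in> GL i"
    by (rule lower_GL) (use L i Borel_minus_diag in \<open>auto simp: subm_def Borel_minus_def\<close>)
  thus ?thesis by (rule GL_detD)
qed

lemma det_subm_U: "U \<in> Borel n \<Longrightarrow> i \<le> n \<Longrightarrow> det (subm i U) \<noteq> 0"
proof -
  assume U: "U \<in> Borel n" and i: "i \<le> n"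
  have "subm i U \<in> GL i"
    by (rule upper_GL) (use U i Borel_diag in \<open>auto simp: subm_def Borel_def\<close>)
  thus ?thesis by (rule GL_detD)
qed

lemma det_subm_P_zero:
  assumes i: "i \<le> n" and nc: "\<not> cutp i u"
  shows "det (subm i (perm_mat n u)) = 0"
proof -
  obtain j where j: "j < i" "i \<le> u j" using nc unfolding cutp_def by auto
  show ?thesis
    by (rule det_zero_col[of _ i j]) (use i j in \<open>auto simp: subm_def\<close>)
qed

lemma det_subm_P_nz:
  assumes u: "pn n u" and i: "i \<le> n" and c: "cutp i u"
  shows "det (subm i (perm_mat n u)) \<noteq> 0"
proof -
  define u' where "u' = (\<lambda>j. if j < i then u j else j)"
  have inj: "inj_on u' {0..<i}" using permutes_inj[OF u] unfolding u'_def inj_on_def inj_def by auto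
  have im: "u' ` {0..<i} \<subseteq> {0..<i}" using c unfolding u'_def cutp_def by auto
  have "u' ` {0..<i} = {0..<i}" using endo_inj_surj[OF _ im inj] by simp
  hence "bij_betw u' {0..<i} {0..<i}" using inj unfolding bij_betw_def by simp
  hence pu': "pn i u'" by (rule bij_imp_permutes) (auto simp: u'_def)
  have "subm i (perm_mat n u) = perm_mat i u'"
    by (rule eq_matI) (use i in \<open>auto simp: subm_def u'_def\<close>)
  moreover have "perm_mat i u' \<in> GL i" by (rule perm_mat_GL[OF pu'])
  ultimately show ?thesis using GL_detD by simp
qed

definition Dm :: "nat \<Rightarrow> (nat \<Rightarrow> nat \<Rightarrow> complex) \<Rightarrow> complex" where
  "Dm i f = (\<Sum>p\<in>{p. p permutes {0..<i}}. signof p * (\<Prod>r = 0..<i. f r (p r)))"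

lemma Dm_cont: "continuous_on UNIV (Dm i)"
  unfolding Dm_def by (intro continuous_intros cont_coord2)

lemma Dm_lead: 
  assumes X: "X \<in> carrier_mat n n" and i: "i \<le> n"
  shows "lead_minor i X = Dm i (mat_fun X)"
proof -
  have c: "subm i X \<in> carrier_mat i i" unfolding subm_def by simp
  have "lead_minor i X = (\<Sum>p\<in>{p. p permutes {0..<i}}. signof p * (\<Prod>r = 0..<i. subm i X $$ (r, p r)))"
    unfolding lead_minor_subm using det_def'[OF c] .
  also have "\<dots> = Dm i (mat_fun X)" unfolding Dm_def
  proof (intro sum.cong refl arg_cong2[where f = "(*)"] prod.cong)
    fix p r assume p: "p \<in> {p. p permutes {0..<i}}" and r: "r \<in> {0..<i}"
    have "p r < i" using pn_lt[of p i r] p r by auto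
    thus "subm i X $$ (r, p r) = mat_fun X r (p r)" using r i X unfolding subm_def mat_fun_def by auto
  qed
  finally show ?thesis .
qed

lemma closed_zero_entries: "closed {f :: nat \<Rightarrow> nat \<Rightarrow> complex. \<forall>k c. c < m \<longrightarrow> m \<le> k \<longrightarrow> k < n \<longrightarrow> f k c = 0}"
proof -
  have e: "{f :: nat \<Rightarrow> nat \<Rightarrow> complex. \<forall>k c. c < m \<longrightarrow> m \<le> k \<longrightarrow> k < n \<longrightarrow> f k c = 0} =
      (\<Inter>k. \<Inter>c. {f. c < m \<longrightarrow> m \<le> k \<longrightarrow> k < n \<longrightarrow> f k c = 0})" by auto
  have "closed {f :: nat \<Rightarrow> nat \<Rightarrow> complex. c < m \<longrightarrow> m \<le> k \<longrightarrow> k < n \<longrightarrow> f k c = 0}" for k c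
  proof (cases "c < m \<and> m \<le> k \<and> k < n")
    case True
    have "closed {f :: nat \<Rightarrow> nat \<Rightarrow> complex. f k c = 0}"
      by (rule closed_Collect_eq[OF cont_coord2 continuous_on_const])
    thus ?thesis using True by simp
  next
    case False thus ?thesis by auto
  qed
  thus ?thesis unfolding e by (intro closed_INT) auto
qed


lemma cellG_clos_mult:
  assumes G: "grp n G1" and P: "perm_mat n v \<in> clos n (cellG G1 n w)"
    and b: "b1 \<in> G1" "b2 \<in> Borel n"
  shows "b1 * perm_mat n v * b2 \<in> clos n (cellG G1 n w)"
  using cell_clos[OF G P] b unfolding cellG_def by blast

lemma schubert_iff: "g \<in> schubert n w \<longleftrightarrow> g \<in> GL n \<and> g \<in> clos n (cellG (Borel n) n w)"
  unfolding schubert_def clos_def cellG_def Bruhat_cell_def using GL_carrier by auto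

lemma opp_schubert_iff: "g \<in> opp_schubert n w \<longleftrightarrow> g \<in> GL n \<and> g \<in> clos n (cellG (Borel_minus n) n w)"
  unfolding opp_schubert_def clos_def cellG_def opp_cell_def using GL_carrier by auto

lemma part1a:
  assumes J: "J \<subseteq> {1..<n}" and g: "g \<in> zero_phi n J"
  shows "g \<in> Pet n \<inter> schubert n (longest n J)"
proof -
  let ?w = "longest n J"
  have gP: "g \<in> Pet n" and M: "minv n g * Njor n * g \<in> Hess n J" using g unfolding zero_phi_def by auto
  have gG: "g \<in> GL n" using gP unfolding Pet_def by auto
  obtain U1 v U2 where d: "U1 \<in> Borel n" "pn n v" "U2 \<in> Borel n" "g = U1 * perm_mat n v * U2"
    using bruhat_plus[OF gG] by blast
  have pt: "petp n J v" by (rule pet_perm_plus[OF gG d(4) d(2) d(1) d(3) M])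
  have vS: "v \<in> SJ n J"
  proof -
    have "cutp m v" if m: "m \<in> {1..<n} - J" for m
    proof -
      have m': "0 < m" "m < n" "m \<notin> J" using m by auto
      have "v m \<noteq> v (m-1)" using permutes_inj[OF d(2)] m' unfolding inj_def by force
      moreover have "\<not> v m < v (m-1)" using desc_J[OF d(2) pt m'(1,2)] m'(3) by blast
      ultimately have "v (m-1) < v m" by simp
      thus ?thesis by (rule asc_cut[OF d(2) pt m'(1,2)])
    qed
    thus ?thesis using d(2) unfolding SJ_def by auto
  qed
  have "perm_mat n v \<in> clos n (cellG (Borel n) n ?w)"
    by (rule bubble_B[OF longest_props[OF J] vS])
  hence "g \<in> clos n (cellG (Borel n) n ?w)" unfolding d(4)
    by (rule cellG_clos_mult[OF grp_Borel _ d(1,3)])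
  thus ?thesis using gP gG schubert_iff by auto
qed

lemma part1b:
  assumes J: "J \<subseteq> {1..<n}" and g: "g \<in> Pet n \<inter> schubert n (longest n J)"
  shows "g \<in> zero_phi n J"
proof -
  let ?w = "longest n J"
  have wS: "?w \<in> SJ n J" using longest_props[OF J] by simp
  have gP: "g \<in> Pet n" using g by auto
  have gG: "g \<in> GL n" and gcl: "g \<in> clos n (cellG (Borel n) n ?w)" using g schubert_iff by auto
  have gc: "g \<in> carrier_mat n n" using GL_carrier[OF gG] .
  have cg: "cutz n m g" if m: "m \<in> {1..<n} - J" for m
  proof -
    let ?Z = "{f :: nat \<Rightarrow> nat \<Rightarrow> complex. \<forall>k c. c < m \<longrightarrow> m \<le> k \<longrightarrow> k < n \<longrightarrow> f k c = 0}"
    have "mat_fun ` cellG (Borel n) n ?w \<subseteq> ?Z"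
    proof
      fix f assume "f \<in> mat_fun ` cellG (Borel n) n ?w"
      then obtain b1 b2 where b: "b1 \<in> Borel n" "b2 \<in> Borel n" "f = mat_fun (b1 * perm_mat n ?w * b2)"
        unfolding cellG_def by auto
      have bc: "b1 \<in> carrier_mat n n" "b2 \<in> carrier_mat n n" using b Borel_carrier by auto
      have c1: "cutz n m b1" "cutz n m b2" using b unfolding Borel_iff by auto
      have "cutp m ?w" using wS m unfolding SJ_def by auto
      hence c2: "cutz n m (perm_mat n ?w)" unfolding cutz_def cutp_def by auto
      have "cutz n m (b1 * perm_mat n ?w * b2)"
        by (intro cutz_mult c1 c2) (use bc in auto)
      thus "f \<in> ?Z" unfolding b(3) cutz_def mat_fun_def using bc by auto
    qed
    hence "closure (mat_fun ` cellG (Borel n) n ?w) \<subseteq> ?Z"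
      by (rule closure_minimal[OF _ closed_zero_entries])
    hence "mat_fun g \<in> ?Z" using gcl unfolding clos_def by auto
    thus ?thesis unfolding cutz_def mat_fun_def using gc by auto
  qed
  note mg = minv_props[OF gG]
  define M where "M = minv n g * Njor n * g"
  have MH: "M \<in> Hess n {1..<n}" using gP unfolding Pet_def M_def by auto
  have cM: "cutz n m M" if m: "m \<in> {1..<n} - J" for m
  proof -
    have "cutz n m (minv n g)" by (rule inv_cutz[OF gc mg(1) mg(3) cg[OF m]])
    moreover have "cutz n m (Njor n)" unfolding cutz_def Njor_def by auto
    ultimately show ?thesis unfolding M_def using mg gc cg[OF m]
      by (intro cutz_mult) auto
  qed
  have "M \<in> Hess n J" unfolding Hess_def
  proof (intro CollectI conjI allI impI)
    show "M \<in> carrier_mat n n" using MH unfolding Hess_def by auto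
    fix r c assume rc: "r < n" "c < r"
    show "M $$ (r,c) = 0 \<or> (r = c + 1 \<and> r \<in> J)"
    proof (cases "r = c + 1 \<and> r \<notin> J")
      case True
      hence "r \<in> {1..<n} - J" using rc by auto
      hence "M $$ (r,c) = 0" using cM rc True unfolding cutz_def by auto
      thus ?thesis by simp
    next
      case False
      thus ?thesis using MH rc unfolding Hess_def by auto
    qed
  qed
  thus ?thesis using gP unfolding zero_phi_def M_def by auto
qed

lemma part2a:
  assumes J: "J \<subseteq> {1..<n}" and g: "g \<in> zero_psi n J"
  shows "g \<in> Pet n \<inter> opp_schubert n (longest n J)"
proof -
  let ?w = "longest n J"
  have gP: "g \<in> Pet n" and lm: "\<And>i. i \<in> J \<Longrightarrow> lead_minor i g = 0" using g unfolding zero_psi_def by auto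
  have gG: "g \<in> GL n" and M: "minv n g * Njor n * g \<in> Hess n {1..<n}" using gP unfolding Pet_def by auto
  obtain L u U where d: "L \<in> Borel_minus n" "pn n u" "U \<in> Borel n" "g = L * perm_mat n u * U"
    using bruhat_minus[OF gG] by blast
  have pt: "petp n {1..<n} u" by (rule pet_perm_minus[OF gG d(4) d(2) d(1) d(3) M])
  define K where "K = {k \<in> {1..<n}. u k < u (k-1)}"
  have ascK: "u (m-1) < u m" if "m \<in> {1..<n} - K" for m
  proof -
    have m': "0 < m" "m < n" using that by auto
    have "u m \<noteq> u (m-1)" using permutes_inj[OF d(2)] m' unfolding inj_def by force
    thus ?thesis using that unfolding K_def by auto
  qed
  have uS: "u \<in> SJ n K"
  proof -
    have "cutp m u" if m: "m \<in> {1..<n} - K" for m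
      using asc_cut[OF d(2) pt _ _ ascK[OF m]] m by auto
    thus ?thesis using d(2) unfolding SJ_def by auto
  qed
  have ud: "desc_on n K u" unfolding desc_on_def K_def by auto
  have JK: "J \<subseteq> K"
  proof
    fix i assume i: "i \<in> J"
    have i': "0 < i" "i < n" "i \<le> n" using i J by auto
    have "lead_minor i g = det (subm i L) * det (subm i (perm_mat n u)) * det (subm i U)"
      unfolding d(4) by (rule lead_minor_dec[OF d(1) d(3) i'(3)])
    hence "det (subm i (perm_mat n u)) = 0"
      using lm[OF i] det_subm_L[OF d(1) i'(3)] det_subm_U[OF d(3) i'(3)] by simp
    hence "\<not> cutp i u" using det_subm_P_nz[OF d(2) i'(3)] by auto
    thus "i \<in> K" using uS i' unfolding SJ_def by auto
  qed
  have wS: "?w \<in> SJ n K" using longest_props(1)[OF J] JK unfolding SJ_def by auto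
  have "perm_mat n u \<in> clos n (cellG (Borel_minus n) n ?w)"
    by (rule bubble_Bm[OF uS ud wS])
  hence "g \<in> clos n (cellG (Borel_minus n) n ?w)" unfolding d(4)
    by (rule cellG_clos_mult[OF grp_Borel_minus _ d(1,3)])
  thus ?thesis using gP gG opp_schubert_iff by auto
qed

lemma part2b:
  assumes J: "J \<subseteq> {1..<n}" and g: "g \<in> Pet n \<inter> opp_schubert n (longest n J)"
  shows "g \<in> zero_psi n J"
proof -
  let ?w = "longest n J"
  have wS: "?w \<in> SJ n J" and wd: "desc_on n J ?w" using longest_props[OF J] by auto
  have pw: "pn n ?w" using wS unfolding SJ_def by auto
  have gP: "g \<in> Pet n" using g by auto
  have gG: "g \<in> GL n" and gcl: "g \<in> clos n (cellG (Borel_minus n) n ?w)" using g opp_schubert_iff by auto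
  have gc: "g \<in> carrier_mat n n" using GL_carrier[OF gG] .
  have "lead_minor i g = 0" if i: "i \<in> J" for i
  proof -
    have i': "0 < i" "i < n" "i \<le> n" using i J by auto
    have nc: "\<not> cutp i ?w"
    proof
      assume c: "cutp i ?w"
      have "?w (i-1) < i" using c i' unfolding cutp_def by auto
      moreover have "i \<le> ?w i" using cut_compl[OF pw c _ i'(2)] by simp
      moreover have "?w i < ?w (i-1)" using descD[OF wd i i'(1,2)] .
      ultimately show False by simp
    qed
    have "mat_fun ` cellG (Borel_minus n) n ?w \<subseteq> {f. Dm i f = 0}"
    proof
      fix f assume "f \<in> mat_fun ` cellG (Borel_minus n) n ?w"
      then obtain b1 b2 where b: "b1 \<in> Borel_minus n" "b2 \<in> Borel n" "f = mat_fun (b1 * perm_mat n ?w * b2)"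
        unfolding cellG_def by auto
      have bc: "b1 \<in> carrier_mat n n" "b2 \<in> carrier_mat n n" using b Borel_carrier Borel_minus_carrier by auto
      have "lead_minor i (b1 * perm_mat n ?w * b2) = 0"
        using lead_minor_dec[OF b(1,2) i'(3)] det_subm_P_zero[OF i'(3) nc] by simp
      moreover have "lead_minor i (b1 * perm_mat n ?w * b2) = Dm i f"
        unfolding b(3) by (rule Dm_lead) (use bc i' in auto)
      ultimately show "f \<in> {f. Dm i f = 0}" by simp
    qed
    moreover have "closed {f. Dm i f = 0}" by (rule closed_Collect_eq[OF Dm_cont continuous_on_const])
    ultimately have "closure (mat_fun ` cellG (Borel_minus n) n ?w) \<subseteq> {f. Dm i f = 0}"
      by (rule closure_minimal)
    hence "Dm i (mat_fun g) = 0" using gcl unfolding clos_def by auto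
    thus ?thesis using Dm_lead[OF gc i'(3)] by simp
  qed
  thus ?thesis using gP unfolding zero_psi_def by auto
qed

theorem proposition3p12:
  fixes n :: nat and J :: "nat set"
  assumes "J \<subseteq> {1..<n}"
  shows "zero_phi n J = Pet n \<inter> schubert n (longest n J)
       \<and> zero_psi n J = Pet n \<inter> opp_schubert n (longest n J)"
  using part1a[OF assms] part1b[OF assms] part2a[OF assms] part2b[OF assms] by blast


end
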